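(* $\mathfrak{B}(V)=F\oplus\mathfrak{L}^-(V)$ if and only if all of the following hold: $p_{ii}=-1$ for all $i$; $p_{ij}p_{ji}=1$ for all $i\neq j$; and for every $m\ge2$ and every choice of pairwise distinct letters $h_1,\dots,h_m\in\{x_1,\dots,x_n\}$ there exists $\tau\in\mathbb{S}_m$ with $$(p_{h_{\tau(1)},h_{\tau(2)}\cdots h_{\tau(m)}}-1)(p_{h_{\tau(2)},h_{\tau(3)}\cdots h_{\tau(m)}}-1)\cdots(p_{h_{\tau(m-1)},h_{\tau(m)}}-1)\neq0 .$$
   Context: $V$ is a braided vector space of diagonal type over an algebraically closed field $F$ of characteristic $0$ with basis $x_1,\dots,x_n$, braiding $C(x_i\otimes x_j)=q_{ij}x_j\otimes x_i$, Nichols algebra $\mathfrak{B}(V)$ ($\mathbb{Z}^n$-graded, $\deg x_i=e_i$); $\chi(e_i,e_j)=q_{ij}$, $p_{ij}:=q_{ij}$, and $p_{u,v}:=\chi(\deg u,\deg v)$ for homogeneous $u,v$ (so $p_{h,h'h''\cdots}$ is the product of $p_{h,h'},p_{h,h''},\dots$). $\mathfrak{L}^-(V)$ is the Lie subalgebra of $\mathfrak{B}(V)$ generated by $V$ under the commutator $[a,b]^-=ab-ba$. *)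

theory Defs
  imports "HOL-Combinatorics.Permutations" "HOL-Computational_Algebra.Polynomial"
begin

text \<open>The tensor algebra T(V) on the basis x_0,...,x_{n-1} is modelled as finitely
supported functions from words (lists of letter indices) to the field.
The word [i1,...,ik] stands for x_i1 x_i2 ... x_ik.\<close>

definition tensor_space :: "nat \<Rightarrow> (nat list \<Rightarrow> 'a::field) set" where
  "tensor_space n = {f. finite {w. f w \<noteq> 0} \<and> (\<forall>w. f w \<noteq> 0 \<longrightarrow> set w \<subseteq> {..<n})}"

definition tone :: "nat list \<Rightarrow> 'a::field" where
  "tone w = (if w = [] then 1 else 0)"

definition tletter :: "nat \<Rightarrow> nat list \<Rightarrow> 'a::field" where
  "tletter i w = (if w = [i] then 1 else 0)"

definition tmul :: "(nat list \<Rightarrow> 'a::field) \<Rightarrow> (nat list \<Rightarrow> 'a) \<Rightarrow> nat list \<Rightarrow> 'a" where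
  "tmul f g w = (\<Sum>i\<le>length w. f (take i w) * g (drop i w))"

definition tcomm :: "(nat list \<Rightarrow> 'a::field) \<Rightarrow> (nat list \<Rightarrow> 'a) \<Rightarrow> nat list \<Rightarrow> 'a" where
  "tcomm f g w = tmul f g w - tmul g f w"

text \<open>Braid lift T_sigma of a permutation sigma of positions: the letter at position a
moves to position sigma a; every pair of positions a < b that is inverted contributes
the braiding factor q (w!a) (w!b), since c(x_i \<otimes> x_j) = q_ij x_j \<otimes> x_i.\<close>

definition permword :: "(nat \<Rightarrow> nat) \<Rightarrow> nat list \<Rightarrow> nat list" where
  "permword \<sigma> w = map (\<lambda>j. w ! inv \<sigma> j) [0..<length w]"

definition braid_coeff :: "(nat \<Rightarrow> nat \<Rightarrow> 'a::field) \<Rightarrow> (nat \<Rightarrow> nat) \<Rightarrow> nat list \<Rightarrow> 'a" where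
  "braid_coeff q \<sigma> w =
     (\<Prod>(a,b)\<in>{(a,b). a < b \<and> b < length w \<and> \<sigma> b < \<sigma> a}. q (w ! a) (w ! b))"

text \<open>Matrix entry of the quantum symmetrizer Omega = sum over all sigma of T_sigma.\<close>
definition omega_entry :: "(nat \<Rightarrow> nat \<Rightarrow> 'a::field) \<Rightarrow> nat list \<Rightarrow> nat list \<Rightarrow> 'a" where
  "omega_entry q w v =
     (\<Sum>\<sigma>\<in>{\<sigma>. \<sigma> permutes {..<length w}}.
        if permword \<sigma> w = v then braid_coeff q \<sigma> w else 0)"

definition omega :: "(nat \<Rightarrow> nat \<Rightarrow> 'a::field) \<Rightarrow> (nat list \<Rightarrow> 'a) \<Rightarrow> nat list \<Rightarrow> 'a" where
  "omega q f v = (\<Sum>w\<in>{w. f w \<noteq> 0 \<and> length w = length v}. f w * omega_entry q w v)"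

text \<open>Defining ideal of the Nichols algebra: I = direct sum of the kernels of the
quantum symmetrizers Omega_k; B(V) = T(V)/I.\<close>
definition nichols_ideal :: "nat \<Rightarrow> (nat \<Rightarrow> nat \<Rightarrow> 'a::field) \<Rightarrow> (nat list \<Rightarrow> 'a) set" where
  "nichols_ideal n q = {f \<in> tensor_space n. \<forall>v. omega q f v = 0}"

text \<open>Lie subalgebra of T(V) generated by V under the commutator; its image in B(V)
is the Lie subalgebra L^-(V) of B(V) generated by V.\<close>
inductive_set lie_gen :: "nat \<Rightarrow> (nat list \<Rightarrow> 'a::field) set" for n where
  gen: "i < n \<Longrightarrow> tletter i \<in> lie_gen n"
| zero: "(\<lambda>w. 0) \<in> lie_gen n"
| add: "a \<in> lie_gen n \<Longrightarrow> b \<in> lie_gen n \<Longrightarrow> (\<lambda>w. a w + b w) \<in> lie_gen n"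
| smult: "a \<in> lie_gen n \<Longrightarrow> (\<lambda>w. c * a w) \<in> lie_gen n"
| bracket: "a \<in> lie_gen n \<Longrightarrow> b \<in> lie_gen n \<Longrightarrow> tcomm a b \<in> lie_gen n"

text \<open>B(V) = F \<oplus> L^-(V), expressed in T(V) modulo the ideal I.\<close>
definition nichols_F_plus_L :: "nat \<Rightarrow> (nat \<Rightarrow> nat \<Rightarrow> 'a::field) \<Rightarrow> bool" where
  "nichols_F_plus_L n q \<longleftrightarrow>
     (\<forall>f\<in>tensor_space n. \<exists>c. \<exists>l\<in>lie_gen n.
        (\<lambda>w. f w - (c * tone w + l w)) \<in> nichols_ideal n q)
   \<and> (\<forall>c. \<forall>l\<in>lie_gen n. (\<lambda>w. c * tone w - l w) \<in> nichols_ideal n q \<longrightarrow> c = 0)"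

end

theory Submission
  imports Defs
begin



definition Pairs :: "nat \<Rightarrow> (nat \<times> nat) set" where
  "Pairs m = {(c,d). c < d \<and> d < m}"

definition Invs :: "(nat \<Rightarrow> nat) \<Rightarrow> nat \<Rightarrow> (nat \<times> nat) set" where
  "Invs \<sigma> m = {(a,b). a < b \<and> b < m \<and> \<sigma> b < \<sigma> a}"

lemma finite_Pairs[simp]: "finite (Pairs m)"
  by (rule finite_subset[of _ "{..<m} \<times> {..<m}"]) (auto simp: Pairs_def)

lemma finite_Invs[simp]: "finite (Invs \<sigma> m)"
  by (rule finite_subset[of _ "{..<m} \<times> {..<m}"]) (auto simp: Invs_def)

lemma braid_coeff_Invs:
  "braid_coeff q \<sigma> w = (\<Prod>(a,b)\<in>Invs \<sigma> (length w). q (w ! a) (w ! b))"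
  by (simp add: braid_coeff_def Invs_def)

lemma perm_lt: "\<sigma> permutes {..<m} \<Longrightarrow> x < m \<Longrightarrow> \<sigma> x < m"
  by (metis lessThan_iff permutes_in_image)

lemma pairs_reindex:
  fixes W :: "nat \<Rightarrow> nat \<Rightarrow> 'a::comm_monoid_mult"
  assumes p: "\<sigma> permutes {..<m}"
  shows "(\<Prod>(c,d)\<in>Pairs m. W (inv \<sigma> c) (inv \<sigma> d)) * (\<Prod>(c,d)\<in>Invs \<sigma> m. W c d)
       = (\<Prod>(c,d)\<in>Pairs m. W c d) * (\<Prod>(c,d)\<in>Invs \<sigma> m. W d c)"
proof -
  define Q where "Q = {(c,d). c < m \<and> d < m \<and> \<sigma> c < \<sigma> d}"
  define NI where "NI = {(c,d). c < d \<and> d < m \<and> \<sigma> c < \<sigma> d}"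
  have inj: "\<sigma> x = \<sigma> y \<longleftrightarrow> x = y" for x y using p by (metis permutes_inj injD)
  have iv1: "inv \<sigma> (\<sigma> x) = x" for x using p by (meson permutes_inverses(2))
  have iv2: "\<sigma> (inv \<sigma> x) = x" for x using p by (meson permutes_inverses(1))
  have ltm: "x < m \<Longrightarrow> \<sigma> x < m" for x using p by (metis lessThan_iff permutes_in_image)
  have iltm: "x < m \<Longrightarrow> inv \<sigma> x < m" for x
    using p by (metis iv2 lessThan_iff permutes_in_image)
  have fQ: "finite Q" by (rule finite_subset[of _ "{..<m} \<times> {..<m}"]) (auto simp: Q_def)
  have fNI: "finite NI" by (rule finite_subset[of _ "{..<m} \<times> {..<m}"]) (auto simp: NI_def)
  have 1: "(\<Prod>(c,d)\<in>Pairs m. W (inv \<sigma> c) (inv \<sigma> d)) = (\<Prod>(c,d)\<in>Q. W c d)"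
  proof (rule prod.reindex_bij_witness[where i = "\<lambda>(c,d). (\<sigma> c, \<sigma> d)" and j = "\<lambda>(c,d). (inv \<sigma> c, inv \<sigma> d)"])
    show "\<And>a. a \<in> Pairs m \<Longrightarrow> (case case a of (c, d) \<Rightarrow> (inv \<sigma> c, inv \<sigma> d) of (c, d) \<Rightarrow> (\<sigma> c, \<sigma> d)) = a"
      by (auto simp: iv2)
    show "\<And>a. a \<in> Pairs m \<Longrightarrow> (case a of (c, d) \<Rightarrow> (inv \<sigma> c, inv \<sigma> d)) \<in> Q"
      by (auto simp: Pairs_def Q_def iv2 iltm)
    show "\<And>b. b \<in> Q \<Longrightarrow> (case case b of (c, d) \<Rightarrow> (\<sigma> c, \<sigma> d) of (c, d) \<Rightarrow> (inv \<sigma> c, inv \<sigma> d)) = b"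
      by (auto simp: iv1)
    show "\<And>b. b \<in> Q \<Longrightarrow> (case b of (c, d) \<Rightarrow> (\<sigma> c, \<sigma> d)) \<in> Pairs m"
      by (auto simp: Pairs_def Q_def ltm)
    show "\<And>a. a \<in> Pairs m \<Longrightarrow> (case case a of (c, d) \<Rightarrow> (inv \<sigma> c, inv \<sigma> d) of (c, d) \<Rightarrow> W c d) =
         (case a of (c, d) \<Rightarrow> W (inv \<sigma> c) (inv \<sigma> d))" by auto
  qed
  have Qs: "Q = NI \<union> (\<lambda>(c,d). (d,c)) ` Invs \<sigma> m"
  proof (rule set_eqI, clarify)
    fix c d
    show "((c,d) \<in> Q) = ((c,d) \<in> NI \<union> (\<lambda>(c,d). (d,c)) ` Invs \<sigma> m)"
    proof
      assume "(c,d) \<in> Q"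
      then have "c < m" "d < m" "\<sigma> c < \<sigma> d" by (auto simp: Q_def)
      moreover then have "c \<noteq> d" by auto
      ultimately show "(c,d) \<in> NI \<union> (\<lambda>(c,d). (d,c)) ` Invs \<sigma> m"
        by (cases "c < d") (auto simp: NI_def Invs_def image_iff intro!: bexI[of _ "(d,c)"])
    qed (auto simp: NI_def Invs_def Q_def)
  qed
  have disj: "NI \<inter> (\<lambda>(c,d). (d,c)) ` Invs \<sigma> m = {}"
    by (auto simp: NI_def Invs_def)
  have injsw: "inj_on (\<lambda>(c,d). (d,c)) (Invs \<sigma> m)" by (auto simp: inj_on_def)
  have 2: "(\<Prod>(c,d)\<in>Q. W c d) = (\<Prod>(c,d)\<in>NI. W c d) * (\<Prod>(c,d)\<in>Invs \<sigma> m. W d c)"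
    unfolding Qs
    apply (subst prod.union_disjoint)
    using fNI disj apply auto[3]
    apply (subst prod.reindex[OF injsw])
    apply (simp add: case_prod_unfold)
    done
  have Ps: "Pairs m = NI \<union> Invs \<sigma> m" "NI \<inter> Invs \<sigma> m = {}"
    by (auto simp: Pairs_def NI_def Invs_def) (metis inj linorder_neq_iff less_irrefl)
  have 3: "(\<Prod>(c,d)\<in>Pairs m. W c d) = (\<Prod>(c,d)\<in>NI. W c d) * (\<Prod>(c,d)\<in>Invs \<sigma> m. W c d)"
    unfolding Ps(1) by (rule prod.union_disjoint) (use fNI Ps(2) in auto)
  show ?thesis unfolding 1 2 3 by (simp add: ac_simps)
qed




lemma K_gen:
  fixes W Q :: "nat \<Rightarrow> nat \<Rightarrow> 'a::field"
  assumes p: "\<sigma> permutes {..<m}"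
    and rel: "\<And>c d. c < m \<Longrightarrow> d < m \<Longrightarrow> c \<noteq> d \<Longrightarrow> W c d = Q c d * W d c"
    and nz: "\<And>c d. c < m \<Longrightarrow> d < m \<Longrightarrow> c \<noteq> d \<Longrightarrow> W c d \<noteq> 0"
  shows "(\<Prod>(c,d)\<in>Invs \<sigma> m. Q c d) * (\<Prod>(c,d)\<in>Pairs m. W (inv \<sigma> c) (inv \<sigma> d))
        = (\<Prod>(c,d)\<in>Pairs m. W c d)"
proof -
  have s: "(\<Prod>(c,d)\<in>Invs \<sigma> m. W c d) = (\<Prod>(c,d)\<in>Invs \<sigma> m. Q c d) * (\<Prod>(c,d)\<in>Invs \<sigma> m. W d c)"
    unfolding prod.distrib[symmetric]
    by (rule prod.cong) (auto simp: Invs_def intro!: rel)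
  have B: "(\<Prod>(c,d)\<in>Invs \<sigma> m. W d c) \<noteq> 0"
    unfolding prod_zero_iff[OF finite_Invs] using nz by (fastforce simp: Invs_def)
  from pairs_reindex[OF p, of W] s B show ?thesis
    by (simp add: ac_simps)
qed

definition iota :: "(nat \<Rightarrow> nat) \<Rightarrow> nat \<Rightarrow> 'a::field" where
  "iota \<sigma> m = (\<Prod>(c,d)\<in>Invs \<sigma> m. (-1))"

lemma iota_sq: "iota \<sigma> m * iota \<sigma> m = 1"
  unfolding iota_def by (simp add: prod_constant power_mult_distrib[symmetric])

definition Vd :: "(nat \<Rightarrow> nat) \<Rightarrow> nat \<Rightarrow> 'a::field_char_0" where
  "Vd p m = (\<Prod>(c,d)\<in>Pairs m. (of_nat (p d) - of_nat (p c)))"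

lemma Vd_rel:
  assumes p: "\<sigma> permutes {..<m}" and inj: "inj_on f {..<m}"
  shows "iota \<sigma> m * (Vd (\<lambda>x. f (inv \<sigma> x)) m :: 'a::field_char_0) = Vd f m"
  unfolding iota_def Vd_def
  by (rule K_gen[OF p, where W = "\<lambda>c d. of_nat (f d) - of_nat (f c)"])
     (use inj in \<open>auto simp: inj_on_def\<close>)

lemma Vd_nz: "inj_on f {..<m} \<Longrightarrow> (Vd f m :: 'a::field_char_0) \<noteq> 0"
  unfolding Vd_def prod_zero_iff[OF finite_Pairs] by (fastforce simp: Pairs_def inj_on_def)

lemma Invs_transpose:
  assumes "a < b" "b < m"
  shows "Invs (transpose a b) m = {(a,b)} \<union> (Pair a ` {a<..<b}) \<union> ((\<lambda>k. (k,b)) ` {a<..<b})"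
  using assms unfolding Invs_def
  by (auto simp: transpose_def split: if_splits)

lemma iota_transpose:
  assumes "a \<noteq> b" "a < m" "b < m"
  shows "iota (transpose a b) m = (-1 :: 'a::field)"
proof -
  have main: "iota (transpose a b) m = (-1 :: 'a)" if "a < b" "b < m" for a b
  proof -
    have c: "card (Invs (transpose a b) m) = 1 + 2 * card {a<..<b}"
      unfolding Invs_transpose[OF that]
      apply (subst card_Un_disjoint, simp, simp, force)+
      apply (simp add: card_image inj_on_def)
      done
    show ?thesis unfolding iota_def by (simp add: prod_constant c)
  qed
  show ?thesis
  proof (cases "a < b")
    case True then show ?thesis using main assms by auto
  next
    case False then have "b < a" using assms by auto
    then show ?thesis using main[of b a] assms by (simp add: transpose_commute)
  qed
qed

lemma iota_comp_transpose:
  assumes p: "\<sigma> permutes {..<m}" and ab: "a \<noteq> b" "a < m" "b < m"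
  shows "iota (\<sigma> \<circ> transpose a b) m = - (iota \<sigma> m :: 'a::field_char_0)"
proof -
  define t where "t = transpose a b"
  have tp: "t permutes {..<m}" unfolding t_def using ab by (simp add: permutes_swap_id)
  have st: "\<sigma> \<circ> t permutes {..<m}" using tp p by (rule permutes_compose)
  have invst: "inv (\<sigma> \<circ> t) = t \<circ> inv \<sigma>"
    using p tp by (simp add: o_inv_distrib permutes_bij t_def inv_transpose_eq)
  have injid: "inj_on (\<lambda>x. x) {..<m}" by simp
  have injt: "inj_on t {..<m}" unfolding t_def by (meson inj_on_subset subset_UNIV bij_is_inj bij_transpose)
  have e1: "iota (\<sigma> \<circ> t) m * (Vd (\<lambda>x. t (inv \<sigma> x)) m :: 'a) = Vd (\<lambda>x. x) m"
    using Vd_rel[OF st injid] invst by simp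
  have e2: "iota \<sigma> m * (Vd (\<lambda>x. t (inv \<sigma> x)) m :: 'a) = Vd t m"
    using Vd_rel[OF p injt] .
  have e3: "iota t m * (Vd (\<lambda>x. t x) m :: 'a) = Vd (\<lambda>x. x) m"
    using Vd_rel[OF tp injid] by (simp add: t_def inv_transpose_eq)
  have it: "iota t m = (-1::'a)" unfolding t_def using iota_transpose ab by blast
  have nz: "(Vd (\<lambda>x. x) m :: 'a) \<noteq> 0" using Vd_nz[OF injid] .
  have "Vd (\<lambda>x. t (inv \<sigma> x)) m = iota \<sigma> m * (Vd t m :: 'a)"
  proof -
    have "Vd (\<lambda>x. t (inv \<sigma> x)) m = (iota \<sigma> m * iota \<sigma> m) * (Vd (\<lambda>x. t (inv \<sigma> x)) m :: 'a)"
      by (simp add: iota_sq)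
    also have "\<dots> = iota \<sigma> m * Vd t m" using e2 by (simp only: mult.assoc)
    finally show ?thesis .
  qed
  then have "iota (\<sigma> \<circ> t) m * iota \<sigma> m * (Vd t m :: 'a) = Vd (\<lambda>x. x) m"
    using e1 by (simp add: ac_simps)
  moreover have "(Vd t m :: 'a) = - Vd (\<lambda>x. x) m"
  proof -
    have "- Vd t m = (Vd (\<lambda>x. x) m :: 'a)" using e3 it by simp
    then show ?thesis by (metis minus_minus)
  qed
  ultimately have yx: "iota (\<sigma> \<circ> t) m * iota \<sigma> m = (-1::'a)"
  proof -
    assume h1: "iota (\<sigma> \<circ> t) m * iota \<sigma> m * Vd t m = (Vd (\<lambda>x. x) m :: 'a)"
      and h2: "(Vd t m :: 'a) = - Vd (\<lambda>x. x) m"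
    have "(iota (\<sigma> \<circ> t) m * iota \<sigma> m + 1) * Vd (\<lambda>x. x) m = (0::'a)"
    proof -
      have "- (iota (\<sigma> \<circ> t) m * iota \<sigma> m * Vd (\<lambda>x. x) m) = (Vd (\<lambda>x. x) m :: 'a)"
        using h1 unfolding h2 by simp
      then have e: "iota (\<sigma> \<circ> t) m * iota \<sigma> m * Vd (\<lambda>x. x) m = - (Vd (\<lambda>x. x) m :: 'a)"
        by (metis minus_minus)
      show ?thesis by (simp only: distrib_right e) simp
    qed
    with nz have "iota (\<sigma> \<circ> t) m * iota \<sigma> m + 1 = (0::'a)" by simp
    then show ?thesis by (simp add: eq_neg_iff_add_eq_0)
  qed
  have "iota (\<sigma> \<circ> t) m = iota (\<sigma> \<circ> t) m * (iota \<sigma> m * (iota \<sigma> m :: 'a))"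
    by (simp add: iota_sq)
  also have "\<dots> = - iota \<sigma> m" using yx by (simp only: mult.assoc[symmetric]) simp
  finally show ?thesis unfolding t_def .
qed




lemma permword_eq: "permword \<sigma> w = permute_list (inv \<sigma>) w"
  by (simp add: permword_def permute_list_def)

lemma length_permword[simp]: "length (permword \<sigma> w) = length w"
  by (simp add: permword_def)

lemma nth_permword: "i < length w \<Longrightarrow> permword \<sigma> w ! i = w ! inv \<sigma> i"
  by (simp add: permword_def)

lemma mset_permword: "\<sigma> permutes {..<length w} \<Longrightarrow> mset (permword \<sigma> w) = mset w"
  unfolding permword_eq by (rule mset_permute_list) (simp add: permutes_inv)

definition Pv :: "nat list \<Rightarrow> nat list set" where
  "Pv v = {w. mset w = mset v}"

lemma finite_Pv[simp]: "finite (Pv v)"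
proof -
  have "Pv v \<subseteq> {xs. set xs \<subseteq> set v \<and> length xs = length v}"
    unfolding Pv_def by (auto dest: mset_eq_setD mset_eq_length)
  then show ?thesis by (rule finite_subset) (simp add: finite_lists_length_eq)
qed

lemma omega_entry_alt:
  "omega_entry q w v = (\<Sum>\<sigma>\<in>{\<sigma>. \<sigma> permutes {..<length w} \<and> permword \<sigma> w = v}. braid_coeff q \<sigma> w)"
proof -
  have f: "finite {\<sigma>. \<sigma> permutes {..<length w}}" by (simp add: finite_permutations)
  show ?thesis unfolding omega_entry_def
    unfolding sum.inter_filter[OF f, symmetric] by (rule sum.cong) auto
qed

lemma omega_entry_nz: "omega_entry q w v \<noteq> 0 \<Longrightarrow> mset w = mset v"
proof -
  assume h: "omega_entry q w v \<noteq> 0"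
  then obtain \<sigma> where "\<sigma> permutes {..<length w}" "permword \<sigma> w = v"
  proof -
    have "{\<sigma>. \<sigma> permutes {..<length w} \<and> permword \<sigma> w = v} \<noteq> {}"
      using h unfolding omega_entry_alt by (metis sum.empty)
    then show ?thesis using that by blast
  qed
  then show ?thesis using mset_permword by metis
qed

lemma omega_sum:
  assumes fin: "finite {w. f w \<noteq> 0}"
  shows "omega q f v = (\<Sum>w\<in>Pv v. f w * omega_entry q w v)"
proof -
  let ?A = "{w. f w \<noteq> 0 \<and> length w = length v}"
  have fA: "finite ?A" using fin by (rule rev_finite_subset) auto
  have "omega q f v = (\<Sum>w\<in>?A \<inter> Pv v. f w * omega_entry q w v)"
    unfolding omega_def
    by (rule sum.mono_neutral_right) (auto simp: fA Pv_def dest: omega_entry_nz)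
  also have "\<dots> = (\<Sum>w\<in>Pv v. f w * omega_entry q w v)"
    by (rule sum.mono_neutral_left) (use finite_Pv[of v] in \<open>auto simp: Pv_def dest: mset_eq_length\<close>)
  finally show ?thesis .
qed

definition Gw :: "(nat \<Rightarrow> nat \<Rightarrow> 'a::field) \<Rightarrow> nat list \<Rightarrow> 'a" where
  "Gw W w = (\<Prod>(c,d)\<in>Pairs (length w). W (w ! c) (w ! d))"

lemma K_word:
  fixes W Q :: "nat \<Rightarrow> nat \<Rightarrow> 'a::field"
  assumes p: "\<sigma> permutes {..<length w}"
    and rel: "\<And>c d. c < length w \<Longrightarrow> d < length w \<Longrightarrow> c \<noteq> d \<Longrightarrow> W (w!c) (w!d) = Q (w!c) (w!d) * W (w!d) (w!c)"
    and nz: "\<And>c d. c < length w \<Longrightarrow> d < length w \<Longrightarrow> c \<noteq> d \<Longrightarrow> W (w!c) (w!d) \<noteq> 0"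
  shows "braid_coeff Q \<sigma> w * Gw W (permword \<sigma> w) = Gw W w"
proof -
  have "Gw W (permword \<sigma> w) = (\<Prod>(c,d)\<in>Pairs (length w). W (w ! inv \<sigma> c) (w ! inv \<sigma> d))"
    unfolding Gw_def length_permword
  proof (rule prod.cong[OF refl], clarify)
    fix c d assume "(c,d) \<in> Pairs (length w)"
    then have "c < length w" "d < length w" by (auto simp: Pairs_def)
    then show "W (permword \<sigma> w ! c) (permword \<sigma> w ! d) = W (w ! inv \<sigma> c) (w ! inv \<sigma> d)"
      by (simp add: nth_permword)
  qed
  moreover have "(\<Prod>(c,d)\<in>Invs \<sigma> (length w). Q (w!c) (w!d)) *
      (\<Prod>(c,d)\<in>Pairs (length w). W (w ! inv \<sigma> c) (w ! inv \<sigma> d))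
      = (\<Prod>(c,d)\<in>Pairs (length w). W (w!c) (w!d))"
    by (rule K_gen[OF p, where W = "\<lambda>c d. W (w!c) (w!d)" and Q = "\<lambda>c d. Q (w!c) (w!d)"])
       (rule rel nz; assumption)+
  ultimately show ?thesis
    unfolding braid_coeff_Invs Gw_def by simp
qed

lemma Gw_nz:
  assumes "\<And>c d. c < length w \<Longrightarrow> d < length w \<Longrightarrow> c \<noteq> d \<Longrightarrow> W (w!c) (w!d) \<noteq> 0"
  shows "Gw W w \<noteq> 0"
  unfolding Gw_def prod_zero_iff[OF finite_Pairs] using assms by (fastforce simp: Pairs_def)

lemma nth_lt: "set w \<subseteq> {..<n} \<Longrightarrow> c < length w \<Longrightarrow> w ! c < n"
  using nth_mem by fastforce

definition theta :: "(nat \<Rightarrow> nat \<Rightarrow> 'a::field) \<Rightarrow> nat \<Rightarrow> nat \<Rightarrow> 'a" where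
  "theta q x y = (if x < y then q x y else 1)"

definition rho :: "(nat \<Rightarrow> nat \<Rightarrow> 'a::field) \<Rightarrow> nat \<Rightarrow> nat \<Rightarrow> 'a" where
  "rho q x y = (if x < y then - q x y else 1)"

definition NN :: "(nat \<Rightarrow> nat \<Rightarrow> 'a::field) \<Rightarrow> nat list \<Rightarrow> 'a" where
  "NN q w = Gw (theta q) w"

locale C2loc =
  fixes n :: nat and q :: "nat \<Rightarrow> nat \<Rightarrow> 'a::field_char_0"
  assumes nonzero: "\<forall>i<n. \<forall>j<n. q i j \<noteq> 0"
    and c2: "\<forall>i<n. \<forall>j<n. i \<noteq> j \<longrightarrow> q i j * q j i = 1"
begin

lemma theta_rel: "x < n \<Longrightarrow> y < n \<Longrightarrow> x \<noteq> y \<Longrightarrow> theta q x y = q x y * theta q y x"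
  using c2 by (auto simp: theta_def mult.commute)

lemma theta_nz: "x < n \<Longrightarrow> y < n \<Longrightarrow> theta q x y \<noteq> 0"
  using nonzero by (auto simp: theta_def)

lemma NN_nz: assumes "set w \<subseteq> {..<n}" shows "NN q w \<noteq> 0"
  unfolding NN_def
proof (rule Gw_nz)
  fix c d assume "c < length w" "d < length w"
  then show "theta q (w!c) (w!d) \<noteq> 0" using assms by (intro theta_nz nth_lt)
qed

lemma braid_distinct:
  assumes p: "\<sigma> permutes {..<length w}" and d: "distinct w" and s: "set w \<subseteq> {..<n}"
  shows "braid_coeff q \<sigma> w * NN q (permword \<sigma> w) = NN q w"
  unfolding NN_def
proof (rule K_word[OF p])
  fix c d' assume "c < length w" "d' < length w" "c \<noteq> d'"
  then show "theta q (w!c) (w!d') = q (w!c) (w!d') * theta q (w!d') (w!c)"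
    using d s by (intro theta_rel) (auto simp: nth_eq_iff_index_eq nth_lt)
next
  fix c d' assume "c < length w" "d' < length w" "c \<noteq> d'"
  then show "theta q (w!c) (w!d') \<noteq> 0" using s by (intro theta_nz) (auto simp: nth_lt)
qed

lemma unique_perm:
  assumes d: "distinct w" and m: "mset w = mset v"
  shows "\<exists>\<sigma>0. {\<sigma>. \<sigma> permutes {..<length w} \<and> permword \<sigma> w = v} = {\<sigma>0}"
proof -
  from m[symmetric] obtain p where p: "p permutes {..<length w}" "permute_list p w = v"
    by (rule mset_eq_permutation)
  define \<sigma>0 where "\<sigma>0 = inv p"
  have s0: "\<sigma>0 permutes {..<length w}" unfolding \<sigma>0_def using p by (simp add: permutes_inv)
  have ii: "inv \<sigma>0 = p" unfolding \<sigma>0_def using p by (simp add: inv_inv_eq permutes_bij)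
  have pw: "permword \<sigma>0 w = v" using p by (simp add: permword_eq ii)
  have "\<sigma> = \<sigma>0" if s: "\<sigma> permutes {..<length w}" "permword \<sigma> w = v" for \<sigma>
  proof -
    have si: "inv \<sigma> permutes {..<length w}" using s by (simp add: permutes_inv)
    have "inv \<sigma> x = p x" for x
    proof (cases "x < length w")
      case True
      have "permword \<sigma> w ! x = permword \<sigma>0 w ! x" using s pw by simp
      then have "w ! inv \<sigma> x = w ! p x" using True by (simp add: nth_permword ii)
      moreover have "inv \<sigma> x < length w" "p x < length w"
        using True si p by (metis lessThan_iff permutes_in_image)+
      ultimately show ?thesis using d by (simp add: nth_eq_iff_index_eq)
    next
      case False
      then show ?thesis using si p by (metis lessThan_iff permutes_not_in)
    qed
    then have "inv \<sigma> = inv \<sigma>0" by (auto simp: ii)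
    then have "inv (inv \<sigma>) = inv (inv \<sigma>0)" by simp
    then show ?thesis using s s0 by (simp add: inv_inv_eq permutes_bij)
  qed
  then show ?thesis using s0 pw by blast
qed

lemma E_distinct:
  assumes d: "distinct w" and m: "mset w = mset v" and s: "set w \<subseteq> {..<n}"
  shows "omega_entry q w v * NN q v = NN q w"
proof -
  obtain \<sigma>0 where e: "{\<sigma>. \<sigma> permutes {..<length w} \<and> permword \<sigma> w = v} = {\<sigma>0}"
    using unique_perm[OF d m] by blast
  then have "\<sigma>0 permutes {..<length w}" "permword \<sigma>0 w = v" by auto
  then show ?thesis unfolding omega_entry_alt e using braid_distinct[OF _ d s] by auto
qed

end

locale C12loc = C2loc +
  assumes c1: "\<forall>i<n. q i i = -1"
begin

lemma rho_rel: "x < n \<Longrightarrow> y < n \<Longrightarrow> rho q x y = (- q x y) * rho q y x"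
  using c2 c1 by (cases "x = y") (auto simp: rho_def mult.commute)

lemma rho_nz: "x < n \<Longrightarrow> y < n \<Longrightarrow> rho q x y \<noteq> 0"
  using nonzero by (auto simp: rho_def)

lemma braid_iota:
  assumes p: "\<sigma> permutes {..<length w}" and s: "set w \<subseteq> {..<n}"
  shows "braid_coeff q \<sigma> w * Gw (rho q) (permword \<sigma> w) = iota \<sigma> (length w) * Gw (rho q) w"
proof -
  have k: "braid_coeff (\<lambda>x y. - q x y) \<sigma> w * Gw (rho q) (permword \<sigma> w) = Gw (rho q) w"
  proof (rule K_word[OF p])
    fix c d assume "c < length w" "d < length w"
    then show "rho q (w!c) (w!d) = - q (w!c) (w!d) * rho q (w!d) (w!c)"
      using s by (intro rho_rel nth_lt)
  next
    fix c d assume "c < length w" "d < length w"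
    then show "rho q (w!c) (w!d) \<noteq> 0"
      using s by (intro rho_nz nth_lt)
  qed
  have b: "braid_coeff (\<lambda>x y. - q x y) \<sigma> w = iota \<sigma> (length w) * braid_coeff q \<sigma> w"
    unfolding braid_coeff_Invs iota_def prod.distrib[symmetric]
    by (rule prod.cong) auto
  from k b have "iota \<sigma> (length w) * (iota \<sigma> (length w) * braid_coeff q \<sigma> w * Gw (rho q) (permword \<sigma> w))
     = iota \<sigma> (length w) * Gw (rho q) w" by (simp add: ac_simps)
  then show ?thesis by (simp add: mult.assoc[symmetric] iota_sq)
qed

lemma E_repeat:
  assumes nd: "\<not> distinct w" and s: "set w \<subseteq> {..<n}"
  shows "omega_entry q w v = 0"
proof -
  define A where "A = {\<sigma>. \<sigma> permutes {..<length w} \<and> permword \<sigma> w = v}"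
  show ?thesis
  proof (cases "A = {}")
    case True then show ?thesis unfolding omega_entry_alt A_def[symmetric] by simp
  next
    case False
    then obtain \<sigma>1 where "\<sigma>1 \<in> A" by auto
    then have mv: "mset v = mset w" unfolding A_def using mset_permword by auto
    then have sv: "set v \<subseteq> {..<n}" using s by (metis set_mset_mset)
    have lv: "length v = length w" using mv by (metis size_mset)
    define Gv where "Gv = Gw (rho q) v"
    have Gvnz: "Gv \<noteq> 0" unfolding Gv_def
    proof (rule Gw_nz)
      fix c d assume "c < length v" "d < length v"
      then show "rho q (v!c) (v!d) \<noteq> 0" using sv by (intro rho_nz nth_lt)
    qed
    have trm: "braid_coeff q \<sigma> w = iota \<sigma> (length w) * Gw (rho q) w / Gv" if "\<sigma> \<in> A" for \<sigma>
      using braid_iota[of \<sigma> w] that s Gvnz unfolding A_def Gv_def by (auto simp: field_simps)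
    obtain a b where ab: "a < length w" "b < length w" "a \<noteq> b" "w ! a = w ! b"
      using nd by (auto simp: distinct_conv_nth)
    define t where "t = transpose a b"
    have tp: "t permutes {..<length w}" unfolding t_def using ab by (simp add: permutes_swap_id)
    have wt: "w ! t k = w ! k" for k unfolding t_def using ab by (auto simp: transpose_def)
    have inA: "\<sigma> \<circ> t \<in> A" if "\<sigma> \<in> A" for \<sigma>
    proof -
      have sp: "\<sigma> permutes {..<length w}" "permword \<sigma> w = v" using that unfolding A_def by auto
      have invst: "inv (\<sigma> \<circ> t) = t \<circ> inv \<sigma>"
        using sp tp by (simp add: o_inv_distrib permutes_bij t_def inv_transpose_eq)
      have "permword (\<sigma> \<circ> t) w = permword \<sigma> w"
        by (rule nth_equalityI) (auto simp: nth_permword invst wt)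
      then show ?thesis using sp permutes_compose[OF tp sp(1)] unfolding A_def by auto
    qed
    have tt: "\<sigma> \<circ> t \<circ> t = \<sigma>" for \<sigma> unfolding t_def by (simp add: comp_assoc)
    have fA: "finite A" unfolding A_def
      by (rule finite_subset[OF _ finite_permutations[of "{..<length w}"]]) auto
    have "(\<Sum>\<sigma>\<in>A. iota \<sigma> (length w) :: 'a) = (\<Sum>\<sigma>\<in>A. iota (\<sigma> \<circ> t) (length w))"
      by (rule sum.reindex_bij_witness[where i = "\<lambda>\<sigma>. \<sigma> \<circ> t" and j = "\<lambda>\<sigma>. \<sigma> \<circ> t"])
         (auto simp: tt inA)
    also have "\<dots> = - (\<Sum>\<sigma>\<in>A. iota \<sigma> (length w))"
      unfolding sum_negf[symmetric]
      by (rule sum.cong) (auto simp: A_def t_def intro!: iota_comp_transpose ab)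
    finally have z0: "(\<Sum>\<sigma>\<in>A. iota \<sigma> (length w) :: 'a) = - (\<Sum>\<sigma>\<in>A. iota \<sigma> (length w))" .
    have z: "(\<Sum>\<sigma>\<in>A. iota \<sigma> (length w) :: 'a) = 0"
    proof -
      let ?x = "(\<Sum>\<sigma>\<in>A. iota \<sigma> (length w) :: 'a)"
      have "2 * ?x = ?x + ?x" by simp
      also have "\<dots> = 0" using z0 by (metis add.right_inverse)
      finally show ?thesis by simp
    qed
    have "omega_entry q w v = (\<Sum>\<sigma>\<in>A. iota \<sigma> (length w) * Gw (rho q) w / Gv)"
      unfolding omega_entry_alt A_def[symmetric] by (rule sum.cong) (auto simp: trm)
    also have "\<dots> = (\<Sum>\<sigma>\<in>A. iota \<sigma> (length w)) * Gw (rho q) w / Gv"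
      by (simp add: sum_divide_distrib sum_distrib_right)
    finally show ?thesis using z by simp
  qed
qed

end




lemma mset_distinct: "mset w = mset v \<Longrightarrow> distinct v \<Longrightarrow> distinct w"
  by (metis card_distinct distinct_card mset_eq_length mset_eq_setD)

definition Dw :: "nat set \<Rightarrow> nat list set" where
  "Dw S = {w. distinct w \<and> set w = S}"

lemma finite_Dw[simp]: "finite (Dw S)"
proof (cases "finite S")
  case True
  show ?thesis unfolding Dw_def
    by (rule finite_subset[OF _ finite_subset_distinct[OF True]]) auto
next
  case False
  then have "Dw S = {}" unfolding Dw_def by auto
  then show ?thesis by simp
qed

lemma Pv_distinct: "distinct v \<Longrightarrow> Pv v = Dw (set v)"
  unfolding Pv_def Dw_def
  by (auto dest: mset_distinct mset_eq_setD simp: set_eq_iff_mset_eq_distinct)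

definition psi :: "(nat \<Rightarrow> nat \<Rightarrow> 'a::field) \<Rightarrow> nat set \<Rightarrow> (nat list \<Rightarrow> 'a) \<Rightarrow> 'a" where
  "psi q S f = (\<Sum>w\<in>Dw S. f w * NN q w)"

lemma psi_diff: "psi q S (\<lambda>w. f w - g w) = psi q S f - psi q S g"
  unfolding psi_def by (simp add: sum_subtractf algebra_simps)

lemma psi_add: "psi q S (\<lambda>w. f w + g w) = psi q S f + psi q S g"
  unfolding psi_def by (simp add: sum.distrib algebra_simps)

lemma psi_smult: "psi q S (\<lambda>w. c * f w) = c * psi q S f"
  unfolding psi_def by (simp add: sum_distrib_left algebra_simps)

lemma psi_zero: "psi q S (\<lambda>w. 0) = 0"
  unfolding psi_def by simp

context C2loc begin

lemma omega_psi:
  assumes fin: "finite {w. f w \<noteq> 0}" and d: "distinct v" and s: "set v \<subseteq> {..<n}"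
  shows "omega q f v * NN q v = psi q (set v) f"
proof -
  have "omega q f v * NN q v = (\<Sum>w\<in>Dw (set v). f w * (omega_entry q w v * NN q v))"
    unfolding omega_sum[OF fin] Pv_distinct[OF d] sum_distrib_right by (simp add: mult.assoc)
  also have "\<dots> = psi q (set v) f" unfolding psi_def
  proof (rule sum.cong[OF refl])
    fix w assume "w \<in> Dw (set v)"
    then have "distinct w" "mset w = mset v" "set w \<subseteq> {..<n}"
      using d s by (auto simp: Dw_def set_eq_iff_mset_eq_distinct)
    then show "f w * (omega_entry q w v * NN q v) = f w * NN q w" by (simp add: E_distinct)
  qed
  finally show ?thesis .
qed

lemma ideal_psi:
  assumes f: "f \<in> nichols_ideal n q" and d: "distinct v" and s: "set v \<subseteq> {..<n}"
  shows "psi q (set v) f = 0"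
proof -
  from f have fin: "finite {w. f w \<noteq> 0}" and z: "omega q f v = 0"
    by (auto simp: nichols_ideal_def tensor_space_def)
  show ?thesis using omega_psi[OF fin d s] z by simp
qed

end

context C12loc begin

lemma psi_ideal:
  assumes f: "f \<in> tensor_space n" and z: "\<forall>S. psi q S f = 0"
  shows "f \<in> nichols_ideal n q"
proof -
  from f have fin: "finite {w. f w \<noteq> 0}" and sup: "\<And>w. f w \<noteq> 0 \<Longrightarrow> set w \<subseteq> {..<n}"
    by (auto simp: tensor_space_def)
  have "omega q f v = 0" for v
  proof (cases "distinct v")
    case True
    show ?thesis
    proof (cases "set v \<subseteq> {..<n}")
      case True
      with \<open>distinct v\<close> have "omega q f v * NN q v = 0" using omega_psi[OF fin] z by simp
      then show ?thesis using NN_nz[OF True] by simp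
    next
      case False
      have "f w = 0" if "w \<in> Pv v" for w
      proof -
        have "mset w = mset v" using that unfolding Pv_def by simp
        then have "set w = set v" by (rule mset_eq_setD)
        then show ?thesis using False sup by blast
      qed
      then show ?thesis unfolding omega_sum[OF fin] by simp
    qed
  next
    case False
    have zz: "f w * omega_entry q w v = 0" if "w \<in> Pv v" for w
    proof (cases "f w = 0")
      case False
      then have "set w \<subseteq> {..<n}" by (rule sup)
      moreover have "\<not> distinct w"
      proof
        assume "distinct w"
        moreover have "mset v = mset w" using that unfolding Pv_def by simp
        ultimately show False using mset_distinct[of v w] \<open>\<not> distinct v\<close> by blast
      qed
      ultimately show ?thesis by (simp add: E_repeat)
    qed simp
    then show ?thesis unfolding omega_sum[OF fin] by (intro sum.neutral) blast
  qed
  then show ?thesis using f by (simp add: nichols_ideal_def)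
qed

end

lemma Pairs_Suc:
  "(\<Prod>(c,d)\<in>Pairs (Suc m). F c d) = (\<Prod>d<m. F 0 (Suc d)) * (\<Prod>(c,d)\<in>Pairs m. F (Suc c) (Suc d))"
proof -
  have e: "Pairs (Suc m) = (\<lambda>d. (0, Suc d)) ` {..<m} \<union> (\<lambda>(c,d). (Suc c, Suc d)) ` Pairs m"
  proof (rule set_eqI, clarify)
    fix c d
    show "((c,d) \<in> Pairs (Suc m)) = ((c,d) \<in> (\<lambda>d. (0, Suc d)) ` {..<m} \<union> (\<lambda>(c,d). (Suc c, Suc d)) ` Pairs m)"
    proof
      assume "(c,d) \<in> Pairs (Suc m)"
      then have "c < d" "d < Suc m" by (auto simp: Pairs_def)
      then show "(c,d) \<in> (\<lambda>d. (0, Suc d)) ` {..<m} \<union> (\<lambda>(c,d). (Suc c, Suc d)) ` Pairs m"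
        by (cases c; cases d) (auto simp: Pairs_def image_iff)
    qed (auto simp: Pairs_def)
  qed
  have i1: "inj_on (\<lambda>d. (0::nat, Suc d)) {..<m}" by (auto simp: inj_on_def)
  have i2: "inj_on (\<lambda>(c,d). (Suc c, Suc d)) (Pairs m)" by (auto simp: inj_on_def)
  have r1: "(\<Prod>p\<in>(\<lambda>d. (0, Suc d)) ` {..<m}. case p of (c,d) \<Rightarrow> F c d) = (\<Prod>d<m. F 0 (Suc d))"
    by (subst prod.reindex[OF i1]) (simp add: comp_def)
  have r2: "(\<Prod>p\<in>(\<lambda>(c,d). (Suc c, Suc d)) ` Pairs m. case p of (c,d) \<Rightarrow> F c d) = (\<Prod>(c,d)\<in>Pairs m. F (Suc c) (Suc d))"
    by (subst prod.reindex[OF i2]) (simp add: case_prod_unfold comp_def)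
  have dj: "(\<lambda>d. (0::nat, Suc d)) ` {..<m} \<inter> (\<lambda>(c,d). (Suc c, Suc d)) ` Pairs m = {}" by auto
  show ?thesis unfolding e prod.union_disjoint[OF finite_imageI[OF finite_lessThan] finite_imageI[OF finite_Pairs] dj] r1 r2 ..
qed

lemma prod_list_nth: "prod_list (map f w) = (\<Prod>d<length w. f (w ! d))"
  by (simp add: prod.list_conv_set_nth atLeast0LessThan)

lemma Gw_Cons: "Gw W (x # w) = prod_list (map (W x) w) * Gw W w"
  unfolding Gw_def length_Cons Pairs_Suc by (simp add: prod_list_nth)

definition crossp :: "(nat \<Rightarrow> nat \<Rightarrow> 'a::field) \<Rightarrow> nat list \<Rightarrow> nat list \<Rightarrow> 'a" where
  "crossp W a b = prod_list (map (\<lambda>x. prod_list (map (W x) b)) a)"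

lemma Gw_append: "Gw W (a @ b) = Gw W a * Gw W b * crossp W a b"
  by (induction a) (simp_all add: Gw_Cons Gw_def[of W "[]"] Pairs_def crossp_def ac_simps)

definition thp :: "(nat \<Rightarrow> nat \<Rightarrow> 'a::field) \<Rightarrow> nat set \<Rightarrow> nat set \<Rightarrow> 'a" where
  "thp q A B = (\<Prod>x\<in>A. \<Prod>y\<in>B. theta q x y)"

lemma NN_append:
  assumes "distinct (a @ b)"
  shows "NN q (a @ b) = NN q a * NN q b * thp q (set a) (set b)"
  using assms unfolding NN_def thp_def Gw_append crossp_def
  by (simp add: prod.distinct_set_conv_list)




lemma sum_prod_split:
  fixes f g :: "'b \<Rightarrow> 'a::comm_ring_1"
  shows "(\<Sum>p\<in>A \<times> B. f (fst p) * g (snd p) * c) = (\<Sum>x\<in>A. f x) * (\<Sum>y\<in>B. g y) * c"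
proof -
  have "(\<Sum>p\<in>A \<times> B. f (fst p) * g (snd p) * c) = (\<Sum>x\<in>A. \<Sum>y\<in>B. f x * g y * c)"
    by (simp add: sum.cartesian_product')
  also have "\<dots> = (\<Sum>x\<in>A. f x * (\<Sum>y\<in>B. g y) * c)"
    by (simp add: sum_distrib_left sum_distrib_right mult.assoc)
  also have "\<dots> = (\<Sum>x\<in>A. f x) * (\<Sum>y\<in>B. g y) * c"
    by (simp add: sum_distrib_right)
  finally show ?thesis .
qed

lemma psi_tmul:
  assumes fS: "finite S"
  shows "psi q S (tmul a b) = (\<Sum>S1\<in>Pow S. psi q S1 a * psi q (S - S1) b * thp q S1 (S - S1))"
proof -
  define T where "T = {(w1,w2). w1 @ w2 \<in> Dw S}"
  have "psi q S (tmul a b) = (\<Sum>w\<in>Dw S. \<Sum>k\<in>{..length w}. a (take k w) * b (drop k w) * NN q w)"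
    unfolding psi_def tmul_def sum_distrib_right by simp
  also have "\<dots> = (\<Sum>(w,k)\<in>Sigma (Dw S) (\<lambda>w. {..length w}). a (take k w) * b (drop k w) * NN q w)"
    by (rule sum.Sigma) auto
  also have "\<dots> = (\<Sum>(w1,w2)\<in>T. a w1 * b w2 * NN q (w1 @ w2))"
  proof (rule sum.reindex_bij_witness[where i = "\<lambda>(w1,w2). (w1 @ w2, length w1)"
        and j = "\<lambda>(w,k). (take k w, drop k w)"])
    fix x assume "x \<in> Sigma (Dw S) (\<lambda>w. {..length w})"
    then show "(case case x of (w, k) \<Rightarrow> (take k w, drop k w) of (w1, w2) \<Rightarrow> (w1 @ w2, length w1)) = x"
      by (cases x) (simp add: min_def)
  next
    fix x assume "x \<in> Sigma (Dw S) (\<lambda>w. {..length w})"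
    then show "(case x of (w, k) \<Rightarrow> (take k w, drop k w)) \<in> T"
      by (cases x) (simp add: T_def)
  next
    fix y assume "y \<in> T"
    then show "(case case y of (w1, w2) \<Rightarrow> (w1 @ w2, length w1) of (w, k) \<Rightarrow> (take k w, drop k w)) = y"
      by (cases y) simp
  next
    fix y assume "y \<in> T"
    then show "(case y of (w1, w2) \<Rightarrow> (w1 @ w2, length w1)) \<in> Sigma (Dw S) (\<lambda>w. {..length w})"
      by (cases y) (simp add: T_def)
  next
    fix x assume "x \<in> Sigma (Dw S) (\<lambda>w. {..length w})"
    then show "(case case x of (w, k) \<Rightarrow> (take k w, drop k w) of (w1, w2) \<Rightarrow> a w1 * b w2 * NN q (w1 @ w2)) =
         (case x of (w, k) \<Rightarrow> a (take k w) * b (drop k w) * NN q w)"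
      by (cases x) simp
  qed
  also have "\<dots> = (\<Sum>(S1,p)\<in>Sigma (Pow S) (\<lambda>S1. Dw S1 \<times> Dw (S - S1)).
                      a (fst p) * b (snd p) * NN q (fst p @ snd p))"
  proof (rule sum.reindex_bij_witness[where i = "\<lambda>(S1,p). p" and j = "\<lambda>(w1,w2). (set w1, (w1,w2))"])
    fix x assume "x \<in> T"
    then show "(case case x of (w1, w2) \<Rightarrow> (set w1, w1, w2) of (S1, p) \<Rightarrow> p) = x" by (cases x) simp
  next
    fix x assume "x \<in> T"
    then show "(case x of (w1, w2) \<Rightarrow> (set w1, w1, w2)) \<in> Sigma (Pow S) (\<lambda>S1. Dw S1 \<times> Dw (S - S1))"
      by (cases x) (auto simp: T_def Dw_def)
  next
    fix y assume "y \<in> Sigma (Pow S) (\<lambda>S1. Dw S1 \<times> Dw (S - S1))"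
    then show "(case case y of (S1, p) \<Rightarrow> p of (w1, w2) \<Rightarrow> (set w1, w1, w2)) = y"
      by (cases y) (auto simp: Dw_def)
  next
    fix y assume "y \<in> Sigma (Pow S) (\<lambda>S1. Dw S1 \<times> Dw (S - S1))"
    then show "(case y of (S1, p) \<Rightarrow> p) \<in> T"
      by (cases y) (auto simp: Dw_def T_def)
  qed (auto simp: case_prod_unfold)
  also have "\<dots> = (\<Sum>S1\<in>Pow S. \<Sum>p\<in>Dw S1 \<times> Dw (S - S1). a (fst p) * b (snd p) * NN q (fst p @ snd p))"
    by (rule sum.Sigma[symmetric]) (auto simp: fS)
  also have "\<dots> = (\<Sum>S1\<in>Pow S. \<Sum>p\<in>Dw S1 \<times> Dw (S - S1).
                      (a (fst p) * NN q (fst p)) * (b (snd p) * NN q (snd p)) * thp q S1 (S - S1))"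
  proof (rule sum.cong[OF refl], rule sum.cong[OF refl])
    fix S1 p assume "S1 \<in> Pow S" "p \<in> Dw S1 \<times> Dw (S - S1)"
    then have "distinct (fst p @ snd p)" "set (fst p) = S1" "set (snd p) = S - S1"
      by (auto simp: Dw_def)
    then show "a (fst p) * b (snd p) * NN q (fst p @ snd p) =
       (a (fst p) * NN q (fst p)) * (b (snd p) * NN q (snd p)) * thp q S1 (S - S1)"
      by (simp add: NN_append)
  qed
  also have "\<dots> = (\<Sum>S1\<in>Pow S. psi q S1 a * psi q (S - S1) b * thp q S1 (S - S1))"
    unfolding psi_def
    by (rule sum.cong[OF refl], rule sum_prod_split[where f="\<lambda>x. a x * NN q x" and g = "\<lambda>x. b x * NN q x"])
  finally show ?thesis .
qed

lemma tcomm_eq: "tcomm a b = (\<lambda>w. tmul a b w - tmul b a w)"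
  by (rule ext) (simp add: tcomm_def)

lemma psi_tcomm:
  assumes fS: "finite S"
  shows "psi q S (tcomm a b) =
    (\<Sum>S1\<in>Pow S. psi q S1 a * psi q (S - S1) b * (thp q S1 (S - S1) - thp q (S - S1) S1))"
proof -
  have "psi q S (tmul b a) = (\<Sum>S1\<in>Pow S. psi q S1 b * psi q (S - S1) a * thp q S1 (S - S1))"
    by (rule psi_tmul[OF fS])
  also have "\<dots> = (\<Sum>S1\<in>Pow S. psi q (S - S1) b * psi q (S - (S - S1)) a * thp q (S - S1) (S - (S - S1)))"
    by (rule sum.reindex_bij_witness[where i = "\<lambda>S1. S - S1" and j = "\<lambda>S1. S - S1"])
       (auto simp: Diff_Diff_Int Int_absorb1 Int_absorb2)
  also have "\<dots> = (\<Sum>S1\<in>Pow S. psi q S1 a * psi q (S - S1) b * thp q (S - S1) S1)"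
  proof (rule sum.cong[OF refl])
    fix S1 assume "S1 \<in> Pow S"
    then have "S - (S - S1) = S1" by auto
    then show "psi q (S - S1) b * psi q (S - (S - S1)) a * thp q (S - S1) (S - (S - S1)) =
        psi q S1 a * psi q (S - S1) b * thp q (S - S1) S1" by (simp add: ac_simps)
  qed
  finally have e: "psi q S (tmul b a) = \<dots>" .
  have e2: "psi q S (tmul a b) = (\<Sum>S1\<in>Pow S. psi q S1 a * psi q (S - S1) b * thp q S1 (S - S1))"
    by (rule psi_tmul[OF fS])
  show ?thesis unfolding tcomm_eq psi_diff e e2 sum_subtractf[symmetric]
    by (simp add: algebra_simps)
qed

lemma Pairs_small[simp]: "Pairs 0 = {}" "Pairs (Suc 0) = {}"
  by (auto simp: Pairs_def)

lemma Dw_single: "Dw {i} = {[i]}"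
proof -
  have "w = [i]" if "distinct w" "set w = {i}" for w
  proof -
    have "length w = 1" using distinct_card[OF that(1)] that(2) by simp
    then obtain x where "w = [x]" by (cases w) auto
    then show ?thesis using that(2) by simp
  qed
  then show ?thesis unfolding Dw_def by auto
qed

lemma Dw_empty: "Dw {} = {[]}"
  unfolding Dw_def by auto

lemma psi_tletter: "psi q S (tletter i) = (if S = {i} then 1 else 0)"
proof -
  have "psi q S (tletter i) = (\<Sum>w\<in>Dw S. if w = [i] then NN q w else 0)"
    unfolding psi_def tletter_def by (rule sum.cong) auto
  also have "\<dots> = (if [i] \<in> Dw S then NN q [i] else 0)"
    by (simp add: sum.delta)
  also have "\<dots> = (if S = {i} then 1 else 0)"
    by (auto simp: Dw_def NN_def Gw_def)
  finally show ?thesis .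
qed

lemma psi_tone: "psi q S tone = (if S = {} then 1 else 0)"
proof -
  have "psi q S tone = (\<Sum>w\<in>Dw S. if w = [] then NN q w else 0)"
    unfolding psi_def tone_def by (rule sum.cong) auto
  also have "\<dots> = (if [] \<in> Dw S then NN q [] else 0)"
    by (simp add: sum.delta)
  also have "\<dots> = (if S = {} then 1 else 0)"
    by (auto simp: Dw_def NN_def Gw_def)
  finally show ?thesis .
qed

lemma psi_letter_comm:
  assumes fS: "finite S"
  shows "psi q S (tcomm (tletter x) g) =
     (if x \<in> S then psi q (S - {x}) g * (thp q {x} (S - {x}) - thp q (S - {x}) {x}) else 0)"
proof -
  have "psi q S (tcomm (tletter x) g) = (\<Sum>S1\<in>Pow S. if S1 = {x} then
     psi q (S - S1) g * (thp q S1 (S - S1) - thp q (S - S1) S1) else 0)"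
    unfolding psi_tcomm[OF fS] psi_tletter by (rule sum.cong) auto
  also have "\<dots> = (if x \<in> S then psi q (S - {x}) g * (thp q {x} (S - {x}) - thp q (S - {x}) {x}) else 0)"
    by (subst sum.delta) (auto simp: fS)
  finally show ?thesis .
qed




subsection \<open>Tensor space closure and Lie elements\<close>

lemma ts_zero: "(\<lambda>w. 0) \<in> tensor_space n"
  by (simp add: tensor_space_def)

lemma ts_add:
  assumes a: "a \<in> tensor_space n" and b: "b \<in> tensor_space n"
  shows "(\<lambda>w. a w + b w) \<in> tensor_space n"
proof -
  have sub: "{w. a w + b w \<noteq> 0} \<subseteq> {w. a w \<noteq> 0} \<union> {w. b w \<noteq> 0}" by auto
  have "finite {w. a w + b w \<noteq> 0}"
    using a b unfolding tensor_space_def by (intro finite_subset[OF sub]) auto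
  moreover have "set w \<subseteq> {..<n}" if "a w + b w \<noteq> 0" for w
  proof -
    have "a w \<noteq> 0 \<or> b w \<noteq> 0" using that by auto
    then show ?thesis using a b unfolding tensor_space_def by auto
  qed
  ultimately show ?thesis unfolding tensor_space_def by auto
qed

lemma ts_diff:
  assumes a: "a \<in> tensor_space n" and b: "b \<in> tensor_space n"
  shows "(\<lambda>w. a w - b w) \<in> tensor_space n"
proof -
  have sub: "{w. a w - b w \<noteq> 0} \<subseteq> {w. a w \<noteq> 0} \<union> {w. b w \<noteq> 0}" by auto
  have "finite {w. a w - b w \<noteq> 0}"
    using a b unfolding tensor_space_def by (intro finite_subset[OF sub]) auto
  moreover have "set w \<subseteq> {..<n}" if "a w - b w \<noteq> 0" for w
  proof -
    have "a w \<noteq> 0 \<or> b w \<noteq> 0" using that by auto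
    then show ?thesis using a b unfolding tensor_space_def by auto
  qed
  ultimately show ?thesis unfolding tensor_space_def by auto
qed

lemma ts_smult: "a \<in> tensor_space n \<Longrightarrow> (\<lambda>w. c * a w) \<in> tensor_space n"
  unfolding tensor_space_def
  by (auto intro: finite_subset[of _ "{w. a w \<noteq> 0}"])

lemma ts_tone: "tone \<in> tensor_space n"
  unfolding tensor_space_def tone_def
  by (auto intro: finite_subset[of _ "{[]}"])

lemma ts_tletter: "i < n \<Longrightarrow> tletter i \<in> tensor_space n"
  unfolding tensor_space_def tletter_def
  by (auto intro: finite_subset[of _ "{[i]}"])

lemma ts_tmul:
  assumes a: "a \<in> tensor_space n" and b: "b \<in> tensor_space n"
  shows "tmul a b \<in> tensor_space n"
proof -
  have key: "\<exists>k\<le>length w. a (take k w) \<noteq> 0 \<and> b (drop k w) \<noteq> 0" if "tmul a b w \<noteq> 0" for w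
  proof (rule ccontr)
    assume "\<not> ?thesis"
    then have "tmul a b w = 0" unfolding tmul_def by (intro sum.neutral) auto
    with that show False by simp
  qed
  have "{w. tmul a b w \<noteq> 0} \<subseteq> (\<lambda>(x,y). x @ y) ` ({w. a w \<noteq> 0} \<times> {w. b w \<noteq> 0})"
  proof
    fix w assume "w \<in> {w. tmul a b w \<noteq> 0}"
    then obtain k where "a (take k w) \<noteq> 0" "b (drop k w) \<noteq> 0" using key by blast
    then show "w \<in> (\<lambda>(x,y). x @ y) ` ({w. a w \<noteq> 0} \<times> {w. b w \<noteq> 0})"
      by (auto intro!: image_eqI[of _ _ "(take k w, drop k w)"])
  qed
  moreover have "finite ((\<lambda>(x,y). x @ y) ` ({w. a w \<noteq> 0} \<times> {w. b w \<noteq> 0}))"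
    using a b by (auto simp: tensor_space_def)
  ultimately have fin: "finite {w. tmul a b w \<noteq> 0}" by (rule finite_subset)
  have "set w \<subseteq> {..<n}" if h: "tmul a b w \<noteq> 0" for w
  proof -
    obtain k where "a (take k w) \<noteq> 0" "b (drop k w) \<noteq> 0" using key[OF h] by blast
    then have "set (take k w) \<subseteq> {..<n}" "set (drop k w) \<subseteq> {..<n}"
      using a b by (auto simp: tensor_space_def)
    then show ?thesis by (metis append_take_drop_id set_append le_sup_iff)
  qed
  with fin show ?thesis by (auto simp: tensor_space_def)
qed

lemma ts_tcomm: "a \<in> tensor_space n \<Longrightarrow> b \<in> tensor_space n \<Longrightarrow> tcomm a b \<in> tensor_space n"
  unfolding tcomm_eq by (intro ts_diff ts_tmul)

lemma lie_ts: "l \<in> lie_gen n \<Longrightarrow> l \<in> tensor_space n"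
  by (induction rule: lie_gen.induct) (auto intro: ts_tletter ts_zero ts_add ts_smult ts_tcomm)

lemma tmul_Nil: "tmul a b [] = a [] * b []"
  by (simp add: tmul_def)

lemma tmul_2: "tmul a b [x,y] = a [] * b [x,y] + a [x] * b [y] + a [x,y] * b []"
  by (simp add: tmul_def numeral_2_eq_2)

lemma lie_Nil: "l \<in> lie_gen n \<Longrightarrow> l [] = 0"
  by (induction rule: lie_gen.induct) (auto simp: tletter_def tcomm_def tmul_Nil)

lemma lie_deg2: "l \<in> lie_gen n \<Longrightarrow> l [x,y] = - l [y,x]"
proof (induction rule: lie_gen.induct)
  case (gen i) then show ?case by (simp add: tletter_def)
next
  case zero then show ?case by simp
next
  case (add a b) then show ?case by simp
next
  case (smult a c) then show ?case by simp
next
  case (bracket a b)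
  then show ?case by (simp add: tcomm_def tmul_2 lie_Nil)
qed

lemma lie_sum: "finite A \<Longrightarrow> (\<forall>T\<in>A. L T \<in> lie_gen n) \<Longrightarrow> (\<lambda>w. \<Sum>T\<in>A. c T * L T w) \<in> lie_gen n"
proof (induction A rule: finite_induct)
  case empty then show ?case by (simp add: lie_gen.zero)
next
  case (insert x F)
  then show ?case by (simp add: lie_gen.add lie_gen.smult)
qed

subsection \<open>Good sets\<close>

inductive goodset :: "(nat \<Rightarrow> nat \<Rightarrow> 'a::field) \<Rightarrow> nat set \<Rightarrow> bool" for q where
  single: "goodset q {x}"
| ins: "x \<notin> S \<Longrightarrow> goodset q S \<Longrightarrow> (\<Prod>y\<in>S. q x y) \<noteq> 1 \<Longrightarrow> goodset q (insert x S)"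

lemma goodset_fin: "goodset q S \<Longrightarrow> finite S \<and> S \<noteq> {}"
  by (induction rule: goodset.induct) auto

definition pp :: "(nat \<Rightarrow> nat \<Rightarrow> 'a::field) \<Rightarrow> nat set \<Rightarrow> nat set \<Rightarrow> 'a" where
  "pp q A B = (\<Prod>x\<in>A. \<Prod>y\<in>B. q x y)"

context C2loc begin

lemma thp_rel:
  assumes "A \<inter> B = {}" "A \<subseteq> {..<n}" "B \<subseteq> {..<n}"
  shows "thp q A B = pp q A B * thp q B A"
proof -
  have "thp q A B = (\<Prod>x\<in>A. \<Prod>y\<in>B. q x y * theta q y x)"
    unfolding thp_def using assms by (intro prod.cong refl theta_rel) auto
  also have "\<dots> = pp q A B * (\<Prod>x\<in>A. \<Prod>y\<in>B. theta q y x)"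
    unfolding pp_def by (simp add: prod.distrib)
  also have "(\<Prod>x\<in>A. \<Prod>y\<in>B. theta q y x) = thp q B A"
    unfolding thp_def by (rule prod.swap)
  finally show ?thesis .
qed

lemma thp_nz:
  assumes "A \<subseteq> {..<n}" "B \<subseteq> {..<n}"
  shows "thp q A B \<noteq> 0"
proof -
  have fA: "finite A" "finite B" using assms finite_subset by auto
  show ?thesis unfolding thp_def using assms fA
    by (auto simp: prod_zero_iff theta_nz subset_iff)
qed

lemma prod_inv1:
  assumes "a \<notin> A" "insert a A \<subseteq> {..<n}"
  shows "(\<Prod>x\<in>A. q x a) * (\<Prod>x\<in>A. q a x) = 1"
  unfolding prod.distrib[symmetric] using assms c2
  by (intro prod.neutral) (auto simp: subset_iff)

lemma good_union:
  assumes "goodset q A"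
  shows "goodset q B \<Longrightarrow> A \<inter> B = {} \<Longrightarrow> A \<subseteq> {..<n} \<Longrightarrow> B \<subseteq> {..<n} \<Longrightarrow> pp q A B \<noteq> 1
     \<Longrightarrow> goodset q (A \<union> B)"
  using assms
proof (induction arbitrary: B rule: goodset.induct)
  case (single x)
  then show ?case by (auto intro!: goodset.ins simp: pp_def)
next
  case (ins a A' B)
  have fA': "finite A'" using goodset_fin[OF ins.hyps(2)] by simp
  have fB: "finite B" using goodset_fin[OF ins.prems(1)] by simp
  define X where "X = (\<Prod>y\<in>A'. q a y)"
  define Y where "Y = (\<Prod>y\<in>B. q a y)"
  define Z where "Z = pp q A' B"
  have X1: "X \<noteq> 1" using ins.hyps(3) by (simp add: X_def)
  have aB: "a \<notin> B" using ins.prems(2) by auto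
  have YZ: "Y * Z \<noteq> 1" using ins.prems(5) ins.hyps(1) fA'
    by (simp add: pp_def Y_def Z_def)
  have cases: "(Z \<noteq> 1 \<and> X * Y \<noteq> 1) \<or> (Y \<noteq> 1 \<and> Z \<noteq> X)"
    using X1 YZ by (metis mult.commute mult_1_right)
  then show ?case
  proof
    assume h: "Z \<noteq> 1 \<and> X * Y \<noteq> 1"
    have g: "goodset q (A' \<union> B)"
      using ins.IH[OF ins.prems(1)] ins.prems h by (auto simp: Z_def)
    have "(\<Prod>y\<in>A' \<union> B. q a y) = X * Y"
      unfolding X_def Y_def using fA' fB ins.prems(2)
      by (intro prod.union_disjoint) auto
    then have "goodset q (insert a (A' \<union> B))"
      using g h ins.hyps(1) aB by (intro goodset.ins) auto
    then show ?thesis by simp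
  next
    assume h: "Y \<noteq> 1 \<and> Z \<noteq> X"
    have gB: "goodset q (insert a B)" using ins.prems(1) aB h by (intro goodset.ins) (auto simp: Y_def)
    define W where "W = (\<Prod>x\<in>A'. q x a)"
    have WX: "W * X = 1" unfolding W_def X_def
      by (rule prod_inv1) (use ins.hyps(1) ins.prems(3) in auto)
    have "pp q A' (insert a B) = (\<Prod>x\<in>A'. q x a * (\<Prod>y\<in>B. q x y))"
      unfolding pp_def using fB aB by (intro prod.cong refl) simp
    also have "\<dots> = W * Z" unfolding W_def Z_def pp_def by (simp add: prod.distrib)
    finally have ppe: "pp q A' (insert a B) = W * Z" .
    have "W * Z \<noteq> 1"
    proof
      assume "W * Z = 1"
      then have "X * (W * Z) = X" by simp
      then have "Z = X" using WX by (simp add: mult.assoc[symmetric] mult.commute)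
      with h show False by simp
    qed
    then have "goodset q (A' \<union> insert a B)"
      using ins.IH[OF gB] ins.prems ins.hyps(1) ppe by auto
    then show ?thesis by simp
  qed
qed

lemma lie_psi_good:
  assumes "l \<in> lie_gen n"
  shows "finite S \<Longrightarrow> S \<subseteq> {..<n} \<Longrightarrow> psi q S l \<noteq> 0 \<Longrightarrow> goodset q S"
  using assms
proof (induction arbitrary: S rule: lie_gen.induct)
  case (gen i)
  from gen.prems(3) have "S = {i}" by (simp add: psi_tletter split: if_splits)
  then show ?case by (simp add: goodset.single)
next
  case zero
  from zero.prems(3) show ?case by (simp add: psi_zero)
next
  case (add a b)
  from add.prems(3) have "psi q S a \<noteq> 0 \<or> psi q S b \<noteq> 0" by (auto simp: psi_add)
  then show ?case using add.IH add.prems by blast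
next
  case (smult a c)
  from smult.prems(3) have "psi q S a \<noteq> 0" by (auto simp: psi_smult)
  then show ?case using smult.IH smult.prems by blast
next
  case (bracket a b S)
  have "(\<Sum>S1\<in>Pow S. psi q S1 a * psi q (S - S1) b * (thp q S1 (S - S1) - thp q (S - S1) S1)) \<noteq> 0"
    using bracket.prems(3) unfolding psi_tcomm[OF bracket.prems(1)] .
  then obtain S1 where S1: "S1 \<in> Pow S"
    "psi q S1 a * psi q (S - S1) b * (thp q S1 (S - S1) - thp q (S - S1) S1) \<noteq> 0"
    by (rule sum.not_neutral_contains_not_neutral)
  have fs: "finite S1" "finite (S - S1)" using S1(1) bracket.prems(1) finite_subset by auto
  have ss: "S1 \<subseteq> {..<n}" "S - S1 \<subseteq> {..<n}" using S1(1) bracket.prems(2) by auto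
  have g1: "goodset q S1" using bracket.IH(1)[OF fs(1) ss(1)] S1(2) by auto
  have g2: "goodset q (S - S1)" using bracket.IH(2)[OF fs(2) ss(2)] S1(2) by auto
  have "thp q S1 (S - S1) - thp q (S - S1) S1 = (pp q S1 (S - S1) - 1) * thp q (S - S1) S1"
    using thp_rel[of S1 "S - S1"] ss by (simp add: algebra_simps)
  then have "pp q S1 (S - S1) \<noteq> 1" using S1(2) by auto
  then have "goodset q (S1 \<union> (S - S1))"
    using good_union[OF g1 g2] ss by auto
  moreover have "S1 \<union> (S - S1) = S" using S1(1) by auto
  ultimately show ?case by simp
qed

end




subsection \<open>Chains\<close>

fun chain :: "(nat \<Rightarrow> nat \<Rightarrow> 'a::field) \<Rightarrow> nat list \<Rightarrow> 'a" where
  "chain q [] = 1"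
| "chain q (x # r) = (if r = [] then 1 else (prod_list (map (q x) r) - 1) * chain q r)"

definition chainI :: "(nat \<Rightarrow> nat \<Rightarrow> 'a::field) \<Rightarrow> nat list \<Rightarrow> 'a" where
  "chainI q s = (\<Prod>k<length s - 1. (\<Prod>l\<in>{k<..<length s}. q (s!k) (s!l)) - 1)"

lemma Suc_img1: "{Suc a<..<Suc b} = Suc ` {a<..<b}"
proof (rule set_eqI)
  fix x show "x \<in> {Suc a<..<Suc b} \<longleftrightarrow> x \<in> Suc ` {a<..<b}"
  proof
    assume h: "x \<in> {Suc a<..<Suc b}"
    then have "x = Suc (x - 1)" "x - 1 \<in> {a<..<b}" by auto
    then show "x \<in> Suc ` {a<..<b}" by (metis imageI)
  qed auto
qed

lemma Suc_img0: "{0<..<Suc b} = Suc ` {..<b}"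
proof (rule set_eqI)
  fix x show "x \<in> {0<..<Suc b} \<longleftrightarrow> x \<in> Suc ` {..<b}"
  proof
    assume h: "x \<in> {0<..<Suc b}"
    then have "x = Suc (x - 1)" "x - 1 \<in> {..<b}" by auto
    then show "x \<in> Suc ` {..<b}" by (metis imageI)
  qed auto
qed

lemma chainI_eq: "chainI q s = chain q s"
proof (induction s)
  case Nil then show ?case by (simp add: chainI_def)
next
  case (Cons x r)
  show ?case
  proof (cases "r = []")
    case True then show ?thesis by (simp add: chainI_def)
  next
    case False
    then obtain m where m: "length r = Suc m" by (cases r) auto
    have t0: "(\<Prod>l\<in>{0<..<length (x # r)}. q ((x # r) ! 0) ((x # r) ! l)) = prod_list (map (q x) r)"
      unfolding prod_list_nth by (simp add: Suc_img0 prod.reindex)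
    have ts: "(\<Prod>l\<in>{Suc i<..<length (x # r)}. q ((x # r) ! Suc i) ((x # r) ! l))
        = (\<Prod>l\<in>{i<..<length r}. q (r ! i) (r ! l))" for i
      by (simp add: Suc_img1 prod.reindex)
    define F where "F k = (\<Prod>l\<in>{k<..<length (x # r)}. q ((x # r) ! k) ((x # r) ! l)) - 1" for k
    have e: "length (x # r) - 1 = Suc m" using m by simp
    have "chainI q (x # r) = (\<Prod>k<Suc m. F k)"
      unfolding chainI_def e F_def ..
    also have "\<dots> = F 0 * (\<Prod>i<m. F (Suc i))" by (rule prod.lessThan_Suc_shift)
    also have "F 0 = prod_list (map (q x) r) - 1" unfolding F_def t0 ..
    also have "(\<Prod>i<m. F (Suc i)) = chainI q r"
      unfolding chainI_def F_def ts using m by simp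
    finally have "chainI q (x # r) = (prod_list (map (q x) r) - 1) * chainI q r" .
    then show ?thesis using Cons False by simp
  qed
qed

lemma good_list:
  assumes "goodset q S"
  shows "\<exists>s. distinct s \<and> set s = S \<and> chain q s \<noteq> 0"
  using assms
proof (induction rule: goodset.induct)
  case (single x)
  then show ?case by (intro exI[of _ "[x]"]) simp
next
  case (ins x S)
  then obtain s where s: "distinct s" "set s = S" "chain q s \<noteq> 0" by blast
  have "s \<noteq> []" using goodset_fin[OF ins.hyps(2)] s by auto
  moreover have "prod_list (map (q x) s) = (\<Prod>y\<in>S. q x y)"
    using s by (metis prod.distinct_set_conv_list)
  ultimately show ?case using s ins.hyps
    by (intro exI[of _ "x # s"]) auto
qed

subsection \<open>Right-normed brackets\<close>

fun rnb :: "nat list \<Rightarrow> (nat list \<Rightarrow> 'a::field)" where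
  "rnb [] = (\<lambda>w. 0)"
| "rnb [x] = tletter x"
| "rnb (x # y # r) = tcomm (tletter x) (rnb (y # r))"

lemma rnb_lie: "set s \<subseteq> {..<n} \<Longrightarrow> rnb s \<in> lie_gen n"
  by (induction s rule: rnb.induct) (auto intro: lie_gen.intros)

context C2loc begin

lemma rnb_psi:
  "distinct s \<Longrightarrow> set s \<subseteq> {..<n} \<Longrightarrow> s \<noteq> [] \<Longrightarrow> chain q s \<noteq> 0 \<Longrightarrow>
   \<exists>\<kappa>. \<kappa> \<noteq> 0 \<and> (\<forall>S. finite S \<longrightarrow> psi q S (rnb s) = (if S = set s then \<kappa> else 0))"
proof (induction s rule: rnb.induct)
  case 1 then show ?case by simp
next
  case (2 x)
  then show ?case by (intro exI[of _ 1]) (auto simp: psi_tletter)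
next
  case (3 x y r)
  define R where "R = set (y # r)"
  have xR: "x \<notin> R" using "3.prems"(1) by (simp add: R_def)
  have Rn: "R \<subseteq> {..<n}" "{x} \<subseteq> {..<n}" using "3.prems"(2) by (auto simp: R_def)
  have ch: "chain q (x # y # r) = (prod_list (map (q x) (y # r)) - 1) * chain q (y # r)" by simp
  then have c1: "chain q (y # r) \<noteq> 0" and c2: "prod_list (map (q x) (y # r)) \<noteq> 1"
    using "3.prems"(4) by auto
  obtain \<kappa> where k: "\<kappa> \<noteq> 0" "\<And>S. finite S \<Longrightarrow> psi q S (rnb (y # r)) = (if S = R then \<kappa> else 0)"
    using "3.IH" "3.prems" c1 unfolding R_def by auto
  define D where "D = thp q {x} R - thp q R {x}"
  have "prod_list (map (q x) (y # r)) = pp q {x} R"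
  proof -
    have "distinct (y # r)" using "3.prems"(1) by simp
    then have "prod_list (map (q x) (y # r)) = (\<Prod>z\<in>set (y # r). q x z)"
      by (metis prod.distinct_set_conv_list)
    then show ?thesis unfolding R_def pp_def by simp
  qed
  then have ppx: "pp q {x} R \<noteq> 1" using c2 by simp
  have "D = (pp q {x} R - 1) * thp q R {x}"
    unfolding D_def using thp_rel[of "{x}" R] xR Rn by (simp add: algebra_simps)
  then have Dnz: "D \<noteq> 0" using ppx thp_nz[OF Rn(1) Rn(2)] by simp
  have "psi q S (rnb (x # y # r)) = (if S = set (x # y # r) then \<kappa> * D else 0)" if fS: "finite S" for S
  proof -
    have "psi q S (rnb (x # y # r)) = (if x \<in> S then psi q (S - {x}) (rnb (y # r)) *
        (thp q {x} (S - {x}) - thp q (S - {x}) {x}) else 0)"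
      using psi_letter_comm[OF fS, of q x "rnb (y # r)"] by simp
    also have "\<dots> = (if x \<in> S \<and> S - {x} = R then \<kappa> * D else 0)"
      using k(2)[of "S - {x}"] fS by (auto simp: D_def)
    also have "(x \<in> S \<and> S - {x} = R) \<longleftrightarrow> S = set (x # y # r)"
      using xR unfolding R_def by auto
    finally show ?thesis .
  qed
  then show ?case using k(1) Dnz by (intro exI[of _ "\<kappa> * D"]) auto
qed

end




subsection \<open>Degree two computations\<close>

lemma perms2:
  assumes "\<sigma> permutes {..<2::nat}"
  shows "\<sigma> = id \<or> \<sigma> = transpose 0 1"
proof -
  have out: "\<sigma> x = x" if "x \<ge> 2" for x using assms that by (meson lessThan_iff not_le permutes_not_in)
  have in0: "\<sigma> 0 < 2" "\<sigma> 1 < 2" using assms by (meson lessThan_iff permutes_in_image zero_less_numeral one_less_numeral_iff semiring_norm(76))+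
  have neq: "\<sigma> 0 \<noteq> \<sigma> 1" using assms by (metis permutes_inj injD zero_neq_one)
  show ?thesis
  proof (cases "\<sigma> 0 = 0")
    case True
    then have "\<sigma> 1 = 1" using in0 neq by linarith
    then have "\<sigma> = id"
    proof -
      have "\<sigma> x = x" for x
        using True \<open>\<sigma> 1 = 1\<close> out[of x] by (cases "x < 2") (auto simp: less_2_cases_iff)
      then show ?thesis by auto
    qed
    then show ?thesis by simp
  next
    case False
    then have s0: "\<sigma> 0 = 1" using in0 by linarith
    then have s1: "\<sigma> 1 = 0" using in0 neq by linarith
    have "\<sigma> x = transpose 0 1 x" for x
      using s0 s1 out[of x] by (cases "x < 2") (auto simp: less_2_cases_iff transpose_def)
    then show ?thesis by auto
  qed
qed

lemma perms2_set: "{\<sigma>. \<sigma> permutes {..<2::nat}} = {id, transpose 0 1}"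
  using perms2 by (auto simp: permutes_id permutes_swap_id)

lemma id_ne_t01: "id \<noteq> transpose (0::nat) 1"
  by (metis id_apply transpose_apply_first zero_neq_one)

lemma permword_id2: "permword id [a,b] = [a,b]"
  by (simp add: permword_def numeral_2_eq_2 upt_rec)

lemma permword_t2: "permword (transpose 0 1) [a,b] = [b,a]"
  by (simp add: permword_def numeral_2_eq_2 upt_rec inv_transpose_eq)

lemma braid_id: "braid_coeff q id w = 1"
proof -
  have "Invs id (length w) = {}" by (auto simp: Invs_def)
  then show ?thesis by (simp add: braid_coeff_Invs)
qed

lemma braid_t2: "braid_coeff q (transpose 0 1) [a,b] = q a b"
proof -
  have "Invs (transpose 0 1) (length [a,b]) = {(0,1)}"
    by (auto simp: Invs_def transpose_def)
  then show ?thesis by (simp add: braid_coeff_Invs)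
qed

lemma E2: "omega_entry q [a,b] v = (if [a,b] = v then 1 else 0) + (if [b,a] = v then q a b else 0)"
proof -
  have l: "length [a,b] = 2" by simp
  have "omega_entry q [a,b] v = (if permword id [a,b] = v then braid_coeff q id [a,b] else 0)
     + (if permword (transpose 0 1) [a,b] = v then braid_coeff q (transpose 0 1) [a,b] else 0)"
    unfolding omega_entry_def l perms2_set using id_ne_t01 by simp
  then show ?thesis by (simp only: permword_id2 permword_t2 braid_id braid_t2)
qed

lemma len2: "length w = 2 \<Longrightarrow> \<exists>a b. w = [a,b]"
  by (cases w; cases "tl w"; auto simp: numeral_2_eq_2)

lemma Pv_ii: "Pv [i,i] = {[i,i]}"
proof -
  have "w = [i,i]" if "mset w = mset [i,i]" for w
  proof -
    have "length w = 2" using that by (metis mset_eq_length length_Cons list.size(3) numeral_2_eq_2)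
    then obtain a b where w: "w = [a,b]" using len2 by blast
    have "set w = {i}" using mset_eq_setD[OF that] by simp
    then show ?thesis using w by auto
  qed
  then show ?thesis unfolding Pv_def by auto
qed

lemma Pv_ij: assumes "i \<noteq> j" shows "Pv [i,j] = {[i,j],[j,i]}"
proof -
  have "w = [i,j] \<or> w = [j,i]" if h: "mset w = mset [i,j]" for w
  proof -
    have "length w = 2" using h by (metis mset_eq_length length_Cons list.size(3) numeral_2_eq_2)
    then obtain a b where w: "w = [a,b]" using len2 by blast
    have "set w = {i,j}" using mset_eq_setD[OF h] by simp
    moreover have "distinct w" using mset_distinct[OF h] assms by simp
    ultimately show ?thesis using w by auto
  qed
  moreover have "mset [j,i] = mset [i,j]" by simp
  ultimately show ?thesis unfolding Pv_def by auto
qed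

lemma fin_ideal: "f \<in> nichols_ideal n q \<Longrightarrow> finite {w. f w \<noteq> 0}"
  by (simp add: nichols_ideal_def tensor_space_def)

lemma ts_delta: "set u \<subseteq> {..<n} \<Longrightarrow> (\<lambda>w. if w = u then 1 else 0) \<in> tensor_space n"
  unfolding tensor_space_def by (auto intro: finite_subset[of _ "{u}"])

definition P1cond :: "nat \<Rightarrow> (nat \<Rightarrow> nat \<Rightarrow> 'a::field) \<Rightarrow> bool" where
  "P1cond n q \<longleftrightarrow> (\<forall>f\<in>tensor_space n. \<exists>c. \<exists>l\<in>lie_gen n.
        (\<lambda>w. f w - (c * tone w + l w)) \<in> nichols_ideal n q)"

lemma derive_c1:
  fixes q :: "nat \<Rightarrow> nat \<Rightarrow> 'a::field_char_0"
  assumes P: "P1cond n q" and i: "i < n"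
  shows "q i i = -1"
proof -
  have "(\<lambda>w. if w = [i,i] then 1 else 0) \<in> tensor_space n" using i by (intro ts_delta) auto
  then have "\<exists>c. \<exists>l\<in>lie_gen n. (\<lambda>w. (if w = [i,i] then 1 else 0) - (c * tone w + l w)) \<in> nichols_ideal n q"
    using P unfolding P1cond_def by (rule bspec[where P = "\<lambda>f. \<exists>c. \<exists>l\<in>lie_gen n. (\<lambda>w. f w - (c * tone w + l w)) \<in> nichols_ideal n q", rotated])
  then obtain c l where l: "l \<in> lie_gen n"
    and g: "(\<lambda>w. (if w = [i,i] then 1 else 0) - (c * tone w + l w)) \<in> nichols_ideal n q"
    by blast
  have l0: "l [i,i] = 0" using lie_deg2[OF l, of i i] by (simp add: eq_neg_iff_add_eq_0)
  have "omega q (\<lambda>w. (if w = [i,i] then 1 else 0) - (c * tone w + l w)) [i,i] = 0"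
    using g by (simp add: nichols_ideal_def)
  then have "1 + q i i = 0"
    unfolding omega_sum[OF fin_ideal[OF g]] Pv_ii using l0 by (simp add: E2 tone_def)
  then show ?thesis by (simp add: eq_neg_iff_add_eq_0 add.commute)
qed

lemma alg2:
  fixes a b x :: "'a::field"
  assumes e1: "(1 - x) + x * b = 0" and e2: "(1 - x) * a + x = 0"
  shows "a * b = 1"
proof -
  have x0: "x \<noteq> 0" using e1 by auto
  have h: "1 - x = - (x * b)" using e1 by (simp add: eq_neg_iff_add_eq_0)
  have "(1 - x) * a + x = x * (1 - a * b)" unfolding h by (simp add: algebra_simps)
  then have "x * (1 - a * b) = 0" using e2 by simp
  then have "1 - a * b = 0" using x0 by simp
  then show ?thesis by simp
qed

lemma derive_c2:
  fixes q :: "nat \<Rightarrow> nat \<Rightarrow> 'a::field_char_0"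
  assumes P: "P1cond n q" and i: "i < n" and j: "j < n" and ij: "i \<noteq> j"
  shows "q i j * q j i = 1"
proof -
  have "(\<lambda>w. if w = [i,j] then 1 else 0) \<in> tensor_space n" using i j by (intro ts_delta) auto
  then have "\<exists>c. \<exists>l\<in>lie_gen n. (\<lambda>w. (if w = [i,j] then 1 else 0) - (c * tone w + l w)) \<in> nichols_ideal n q"
    using P unfolding P1cond_def by (rule bspec[where P = "\<lambda>f. \<exists>c. \<exists>l\<in>lie_gen n. (\<lambda>w. f w - (c * tone w + l w)) \<in> nichols_ideal n q", rotated])
  then obtain c l where l: "l \<in> lie_gen n"
    and g: "(\<lambda>w. (if w = [i,j] then 1 else 0) - (c * tone w + l w)) \<in> nichols_ideal n q"
    by blast
  define G where "G = (\<lambda>w. (if w = [i,j] then 1 else 0) - (c * tone w + l w))"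
  have l0: "l [j,i] = - l [i,j]" using lie_deg2[OF l, of j i] .
  have Gij: "G [i,j] = 1 - l [i,j]" by (simp add: G_def tone_def)
  have Gji: "G [j,i] = l [i,j]" using ij by (simp add: G_def tone_def l0)
  have fin: "finite {w. G w \<noteq> 0}" using fin_ideal[OF g] by (simp add: G_def)
  have o1: "omega q G [i,j] = 0" and o2: "omega q G [j,i] = 0"
    using g by (simp_all add: nichols_ideal_def G_def)
  have pv2: "Pv [j,i] = {[i,j],[j,i]}" using Pv_ij[of j i] ij by auto
  have "G [i,j] + G [j,i] * q j i = 0"
    using o1 unfolding omega_sum[OF fin] Pv_ij[OF ij] using ij by (simp add: E2)
  moreover have "G [i,j] * q i j + G [j,i] = 0"
    using o2 unfolding omega_sum[OF fin] pv2 using ij by (simp add: E2)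
  ultimately show ?thesis using alg2[of "l [i,j]" "q j i" "q i j"] unfolding Gij Gji
    by (simp add: mult.commute)
qed




lemma psi_Nil: "psi q {} f = f []"
  by (simp add: psi_def Dw_empty NN_def Gw_def)

lemma psi_inf: "\<not> finite S \<Longrightarrow> psi q S f = 0"
proof -
  assume "\<not> finite S"
  then have "Dw S = {}" unfolding Dw_def by auto
  then show ?thesis by (simp add: psi_def)
qed

lemma psi_delta: "distinct u \<Longrightarrow> psi q (set u) (\<lambda>w. if w = u then 1 else 0) = NN q u"
proof -
  assume d: "distinct u"
  have "psi q (set u) (\<lambda>w. if w = u then 1 else 0) = (\<Sum>w\<in>Dw (set u). if w = u then NN q w else 0)"
    unfolding psi_def by (rule sum.cong) auto
  also have "\<dots> = NN q u" using d by (subst sum.delta[OF finite_Dw]) (auto simp: Dw_def)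
  finally show ?thesis .
qed

lemma psi_comb: "psi q S (\<lambda>w. f w - (c * tone w + l w)) = psi q S f - (c * psi q S tone + psi q S l)"
  using psi_diff[of q S f "\<lambda>w. c * tone w + l w"] psi_add[of q S "\<lambda>w. c * tone w" l]
    psi_smult[of q S c tone] by simp

lemma psi_sum: "psi q S (\<lambda>w. \<Sum>T\<in>F. a T * L T w) = (\<Sum>T\<in>F. a T * psi q S (L T))"
  unfolding psi_def sum_distrib_right sum_distrib_left
  by (subst sum.swap) (simp add: mult.assoc)

context C2loc begin

lemma C3_from:
  fixes m :: nat and h :: "nat \<Rightarrow> nat"
  assumes P: "P1cond n q"
    and m: "2 \<le> m" and inj: "inj_on h {..<m}" and hs: "h ` {..<m} \<subseteq> {..<n}"
  shows "\<exists>\<tau>. \<tau> permutes {..<m} \<and> (\<Prod>k<m - 1. (\<Prod>l\<in>{k<..<m}. q (h (\<tau> k)) (h (\<tau> l))) - 1) \<noteq> 0"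
proof -
  define u where "u = map h [0..<m]"
  have du: "distinct u" unfolding u_def using inj by (simp add: distinct_map atLeast0LessThan)
  have su: "set u = h ` {..<m}" unfolding u_def by (simp add: atLeast0LessThan)
  have lu: "length u = m" unfolding u_def by simp
  have un: "set u \<subseteq> {..<n}" using su hs by simp
  have ts: "(\<lambda>w. if w = u then 1 else 0) \<in> tensor_space n" by (rule ts_delta[OF un])
  have "\<exists>c. \<exists>l\<in>lie_gen n. (\<lambda>w. (if w = u then 1 else 0) - (c * tone w + l w)) \<in> nichols_ideal n q"
    using ts P unfolding P1cond_def
    by (rule bspec[where P = "\<lambda>f. \<exists>c. \<exists>l\<in>lie_gen n. (\<lambda>w. f w - (c * tone w + l w)) \<in> nichols_ideal n q", rotated])
  then obtain c l where l: "l \<in> lie_gen n"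
    and g: "(\<lambda>w. (if w = u then 1 else 0) - (c * tone w + l w)) \<in> nichols_ideal n q"
    by blast
  have "psi q (set u) (\<lambda>w. (if w = u then 1 else 0) - (c * tone w + l w)) = 0"
    by (rule ideal_psi[OF g du un])
  moreover have "set u \<noteq> {}" using lu m by auto
  ultimately have "psi q (set u) l = NN q u"
    unfolding psi_comb psi_delta[OF du] psi_tone by simp
  then have "psi q (set u) l \<noteq> 0" using NN_nz[OF un] by simp
  then have "goodset q (set u)" using lie_psi_good[OF l] un by auto
  then obtain s where s: "distinct s" "set s = set u" "chain q s \<noteq> 0"
    using good_list by blast
  have "mset s = mset u" using s du by (simp add: set_eq_iff_mset_eq_distinct)
  then obtain \<tau> where \<tau>: "\<tau> permutes {..<length u}" "permute_list \<tau> u = s"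
    by (rule mset_eq_permutation)
  have ls: "length s = m" using \<tau>(2) lu by auto
  have sk: "s ! k = h (\<tau> k)" if "k < m" for k
  proof -
    have "\<tau> k < m" using \<tau>(1) that lu by (metis lessThan_iff permutes_in_image)
    then show ?thesis using \<tau> that lu unfolding u_def by (auto simp: permute_list_nth)
  qed
  have "chainI q s = (\<Prod>k<m - 1. (\<Prod>l\<in>{k<..<m}. q (h (\<tau> k)) (h (\<tau> l))) - 1)"
    unfolding chainI_def ls by (intro prod.cong refl arg_cong2[where f = "(-)"]) (auto simp: sk)
  then show ?thesis using s(3) \<tau>(1) lu by (auto simp: chainI_eq)
qed

end

context C12loc begin

lemma L_exists:
  assumes C3: "\<forall>(m::nat) (h::nat \<Rightarrow> nat). 2 \<le> m \<and> inj_on h {..<m} \<and> h ` {..<m} \<subseteq> {..<n} \<longrightarrow>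
          (\<exists>\<tau>. \<tau> permutes {..<m} \<and>
             (\<Prod>k<m - 1. (\<Prod>l\<in>{k<..<m}. q (h (\<tau> k)) (h (\<tau> l))) - 1) \<noteq> 0)"
    and d: "distinct u" and ne: "u \<noteq> []" and un: "set u \<subseteq> {..<n}"
  shows "\<exists>L\<in>lie_gen n. \<forall>S. finite S \<longrightarrow> psi q S L = (if S = set u then 1 else 0)"
proof -
  have "\<exists>s. distinct s \<and> set s = set u \<and> chain q s \<noteq> 0"
  proof (cases "length u = 1")
    case True
    then obtain x where "u = [x]" by (cases u) auto
    then show ?thesis by (intro exI[of _ u]) auto
  next
    case False
    have "length u \<noteq> 0" using ne by simp
    then have m: "2 \<le> length u" using False by linarith
    have inj: "inj_on ((!) u) {..<length u}" using d by (simp add: inj_on_def nth_eq_iff_index_eq)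
    have img: "(!) u ` {..<length u} = set u" by (auto simp: set_conv_nth)
    obtain \<tau> where \<tau>: "\<tau> permutes {..<length u}"
      "(\<Prod>k<length u - 1. (\<Prod>l\<in>{k<..<length u}. q (u ! (\<tau> k)) (u ! (\<tau> l))) - 1) \<noteq> 0"
      using C3 m inj img un by blast
    define s where "s = permute_list \<tau> u"
    have ms: "mset s = mset u" unfolding s_def by (rule mset_permute_list[OF \<tau>(1)])
    have ds: "distinct s" using mset_distinct[OF ms d] .
    have ss: "set s = set u" using ms by (metis set_mset_mset)
    have ls: "length s = length u" unfolding s_def by simp
    have "chainI q s = (\<Prod>k<length u - 1. (\<Prod>l\<in>{k<..<length u}. q (u ! (\<tau> k)) (u ! (\<tau> l))) - 1)"
      unfolding chainI_def ls
      by (intro prod.cong refl arg_cong2[where f = "(-)"]) (auto simp: s_def permute_list_nth[OF \<tau>(1)])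
    then have "chain q s \<noteq> 0" using \<tau>(2) by (simp add: chainI_eq)
    then show ?thesis using ds ss by blast
  qed
  then obtain s where s: "distinct s" "set s = set u" "chain q s \<noteq> 0" by blast
  have sne: "s \<noteq> []" using s(2) ne by auto
  have sn: "set s \<subseteq> {..<n}" using s(2) un by simp
  obtain \<kappa> where k: "\<kappa> \<noteq> 0" "\<forall>S. finite S \<longrightarrow> psi q S (rnb s) = (if S = set s then \<kappa> else 0)"
    using rnb_psi[OF s(1) sn sne s(3)] by blast
  define L where "L = (\<lambda>w. inverse \<kappa> * rnb s w)"
  have "L \<in> lie_gen n" unfolding L_def by (intro lie_gen.smult rnb_lie sn)
  moreover have "\<forall>S. finite S \<longrightarrow> psi q S L = (if S = set u then 1 else 0)"
    using k s(2) unfolding L_def psi_smult by auto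
  ultimately show ?thesis by blast
qed

lemma from_conds:
  assumes C3: "\<forall>(m::nat) (h::nat \<Rightarrow> nat). 2 \<le> m \<and> inj_on h {..<m} \<and> h ` {..<m} \<subseteq> {..<n} \<longrightarrow>
          (\<exists>\<tau>. \<tau> permutes {..<m} \<and>
             (\<Prod>k<m - 1. (\<Prod>l\<in>{k<..<m}. q (h (\<tau> k)) (h (\<tau> l))) - 1) \<noteq> 0)"
  shows "nichols_F_plus_L n q"
proof -
  have part1: "\<exists>c. \<exists>l\<in>lie_gen n. (\<lambda>w. f w - (c * tone w + l w)) \<in> nichols_ideal n q"
    if f: "f \<in> tensor_space n" for f
  proof -
    have finf: "finite {w. f w \<noteq> 0}" and supf: "\<And>w. f w \<noteq> 0 \<Longrightarrow> set w \<subseteq> {..<n}"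
      using f by (auto simp: tensor_space_def)
    define A where "A = {w. f w \<noteq> 0 \<and> distinct w \<and> w \<noteq> []}"
    define SS where "SS = set ` A"
    have fSS: "finite SS" unfolding SS_def A_def by (rule finite_imageI, rule finite_subset[OF _ finf]) auto
    define P where "P = (\<lambda>T L. L \<in> lie_gen n \<and> (\<forall>S. finite S \<longrightarrow> psi q S L = (if S = T then 1 else 0)))"
    define LL where "LL = (\<lambda>T. SOME L. P T L)"
    have LL: "P T (LL T)" if T: "T \<in> SS" for T
    proof -
      obtain u where u: "u \<in> A" "T = set u" using T unfolding SS_def by blast
      obtain L0 where L0: "L0 \<in> lie_gen n" "\<forall>S. finite S \<longrightarrow> psi q S L0 = (if S = set u then 1 else 0)"
        using L_exists[OF C3, of u] u supf unfolding A_def by auto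
      then have "P T L0" unfolding P_def u(2) by blast
      then have "\<exists>L. P T L" by blast
      then show ?thesis unfolding LL_def by (rule someI_ex)
    qed
    define l where "l = (\<lambda>w. \<Sum>T\<in>SS. psi q T f * LL T w)"
    have l_lie: "l \<in> lie_gen n" unfolding l_def
      by (rule lie_sum[OF fSS]) (use LL in \<open>auto simp: P_def\<close>)
    define c where "c = f []"
    define g where "g = (\<lambda>w. f w - (c * tone w + l w))"
    have gts: "g \<in> tensor_space n" unfolding g_def
      by (intro ts_diff ts_add ts_smult ts_tone lie_ts f l_lie)
    have "psi q S g = 0" for S
    proof (cases "finite S")
      case False then show ?thesis by (simp add: psi_inf)
    next
      case True
      have pl: "psi q S l = (\<Sum>T\<in>SS. psi q T f * (if S = T then 1 else 0))"
        unfolding l_def psi_sum using LL True by (intro sum.cong refl) (auto simp: P_def)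
      also have "\<dots> = (if S \<in> SS then psi q S f else 0)"
        using fSS by (simp add: sum.delta' if_distrib cong: if_cong)
      finally have pl: "psi q S l = (if S \<in> SS then psi q S f else 0)" .
      show ?thesis
      proof (cases "S = {}")
        case True
        have "{} \<notin> SS" unfolding SS_def A_def by auto
        then show ?thesis unfolding g_def psi_comb pl using True by (simp add: psi_tone psi_Nil c_def)
      next
        case False
        show ?thesis
        proof (cases "S \<in> SS")
          case True then show ?thesis unfolding g_def psi_comb pl using \<open>S \<noteq> {}\<close> by (simp add: psi_tone)
        next
          case notin: False
          have "psi q S f = 0" unfolding psi_def
          proof (rule sum.neutral, rule ballI)
            fix w assume w: "w \<in> Dw S"
            have "f w = 0"
            proof (rule ccontr)
              assume "f w \<noteq> 0"
              then have "w \<in> A" using w \<open>S \<noteq> {}\<close> unfolding A_def Dw_def by auto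
              then have "S \<in> SS" using w unfolding SS_def Dw_def by auto
              with notin show False by simp
            qed
            then show "f w * NN q w = 0" by simp
          qed
          then show ?thesis unfolding g_def psi_comb pl using \<open>S \<noteq> {}\<close> notin by (simp add: psi_tone)
        qed
      qed
    qed
    then have "g \<in> nichols_ideal n q" using psi_ideal[OF gts] by blast
    then show ?thesis using l_lie unfolding g_def by blast
  qed
  have part2: "c = 0" if l: "l \<in> lie_gen n" and h: "(\<lambda>w. c * tone w - l w) \<in> nichols_ideal n q" for c l
  proof -
    have "psi q (set []) (\<lambda>w. c * tone w - l w) = 0" by (rule ideal_psi[OF h]) auto
    then show ?thesis using lie_Nil[OF l] by (simp add: psi_Nil tone_def)
  qed
  show ?thesis unfolding nichols_F_plus_L_def using part1 part2 by blast
qed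

end

theorem proposition6p4:
  fixes n :: nat and q :: "nat \<Rightarrow> nat \<Rightarrow> 'a::field_char_0"
  assumes alg_closed: "\<forall>p :: 'a poly. degree p > 0 \<longrightarrow> (\<exists>x. poly p x = 0)"
    and nonzero: "\<forall>i<n. \<forall>j<n. q i j \<noteq> 0"
  shows "nichols_F_plus_L n q \<longleftrightarrow>
    ((\<forall>i<n. q i i = -1)
     \<and> (\<forall>i<n. \<forall>j<n. i \<noteq> j \<longrightarrow> q i j * q j i = 1)
     \<and> (\<forall>(m::nat) (h::nat \<Rightarrow> nat). 2 \<le> m \<and> inj_on h {..<m} \<and> h ` {..<m} \<subseteq> {..<n} \<longrightarrow>
          (\<exists>\<tau>. \<tau> permutes {..<m} \<and>
             (\<Prod>k<m - 1. (\<Prod>l\<in>{k<..<m}. q (h (\<tau> k)) (h (\<tau> l))) - 1) \<noteq> 0)))"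
proof
  assume L: "nichols_F_plus_L n q"
  then have P: "P1cond n q" unfolding nichols_F_plus_L_def P1cond_def by blast
  have c1: "\<forall>i<n. q i i = -1" using derive_c1[OF P] by blast
  have c2: "\<forall>i<n. \<forall>j<n. i \<noteq> j \<longrightarrow> q i j * q j i = 1" using derive_c2[OF P] by blast
  interpret C2loc n q using nonzero c2 by unfold_locales
  show "(\<forall>i<n. q i i = -1)
     \<and> (\<forall>i<n. \<forall>j<n. i \<noteq> j \<longrightarrow> q i j * q j i = 1)
     \<and> (\<forall>(m::nat) (h::nat \<Rightarrow> nat). 2 \<le> m \<and> inj_on h {..<m} \<and> h ` {..<m} \<subseteq> {..<n} \<longrightarrow>
          (\<exists>\<tau>. \<tau> permutes {..<m} \<and>
             (\<Prod>k<m - 1. (\<Prod>l\<in>{k<..<m}. q (h (\<tau> k)) (h (\<tau> l))) - 1) \<noteq> 0))"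
    using c1 c2 C3_from[OF P] by blast
next
  assume R: "(\<forall>i<n. q i i = -1)
     \<and> (\<forall>i<n. \<forall>j<n. i \<noteq> j \<longrightarrow> q i j * q j i = 1)
     \<and> (\<forall>(m::nat) (h::nat \<Rightarrow> nat). 2 \<le> m \<and> inj_on h {..<m} \<and> h ` {..<m} \<subseteq> {..<n} \<longrightarrow>
          (\<exists>\<tau>. \<tau> permutes {..<m} \<and>
             (\<Prod>k<m - 1. (\<Prod>l\<in>{k<..<m}. q (h (\<tau> k)) (h (\<tau> l))) - 1) \<noteq> 0))"
  interpret C12loc n q using nonzero R by unfold_locales auto
  show "nichols_F_plus_L n q" using from_conds R by blast
qed


end
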